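(* Fix $P>0$, $\sigma>0$, $c\in(0,P)$, and let $\lambda_n:=2\Phi(-\log n)$, $d=3\sigma\log n$, $r_1=\sqrt{cn}$, $r_2=(cn)^{1/4}$. For all sufficiently large $n$ there exist the following objects: a $d$-angle-dense arrangement $\{o_{s_1}\}_{s_1=1}^{N_1}$ on the sphere of radius $r_1$ centred at the origin in $\mathbb{R}^n$, and for each $s_1$ a $d$-angle-dense arrangement $\{o_{s_1,s_2}\}_{s_2=1}^{N_2}$ on the sphere of radius $r_2$ centred at $o_{s_1}$ inside the affine hyperplane $o_{s_1}+\{x:(x,o_{s_1})=0\}$, such that the code with code words $u_{(s_1,s_2)}=o_{s_1,s_2}$ and decoding sets \[ \mathcal{D}_{(s_1,s_2)}=\Bigl\{y:\ \tfrac{|(y-o_{s_1},\,o_{s_1})|}{r_1}\le\sigma\log n\Bigr\}\cap\Bigl\{y:\ \tfrac{|(y-o_{s_1,s_2},\,o_{s_1,s_2}-o_{s_1})|}{r_2}\le\sigma\log n\Bigr\} \] is an $(n,N_1N_2,2\lambda_n,\lambda_n)$ DI code for the AWGN channel with noise standard deviation $\sigma$ and power constraint $P$, with $\frac{\log(N_1N_2)}{n\log n}\ge\frac38-o(1)$ as $n\to\infty$. In particular the linearithmic rate $\dot R=\frac38$ is achievable.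
   Context: AWGN channel: on input $x^n\in\mathbb{R}^n$ the output is $Y^n=x^n+\sigma Z^n$ with $Z^n$ having i.i.d. $\mathcal{N}(0,1)$ components; i.e. output distribution $\mathcal{G}_{x^n}=\mathcal{N}(x^n,\sigma^2 I_n)$. Admissible inputs satisfy $\|x^n\|^2\le nP$. An $(n,N,\lambda_1,\lambda_2)$ DI code is a family $\{(u_i,\mathcal{D}_i)\}_{i=1}^N$ of admissible $u_i\in\mathbb{R}^n$ and measurable $\mathcal{D}_i\subseteq\mathbb{R}^n$ with $\mathcal{G}_{u_i}(\mathcal{D}_i)\ge 1-\lambda_1$ and $\mathcal{G}_{u_j}(\mathcal{D}_i)\le\lambda_2$ for all $i\neq j$. A number $\dot R>0$ is an achievable linearithmic rate if for every $\epsilon>0$ there are $n_0$ and $(n,N^{(n)},\lambda_1^{(n)},\lambda_2^{(n)})$ DI codes for all $n\ge n_0$ with $\lambda_1^{(n)},\lambda_2^{(n)}\to0$ and $\frac{\log N^{(n)}}{n\log n}\ge\dot R-\epsilon$. $\Phi$ is the standard Gaussian CDF. $\Pi_{\vec a}\vec v:=\frac{(\vec a,\vec v)}{\|\vec a\|^2}\vec a$. A set of points $\{p_j\}$ on a sphere centred at a point $c$ is $d$-angle-dense if, writing $a_j=p_j-c$, one has $\|\Pi_{a_k}a_j-a_k\|\ge d$ for all $j\neq k$. Logarithms are to base 2. *)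

theory Defs
  imports "HOL-Probability.Probability"
begin

text \<open>Vectors of R^n are represented as extensional functions nat => real
  (elements of PiE {..<n} (%_. UNIV)), the carrier of the product measure.\<close>

definition inner_n :: "nat \<Rightarrow> (nat \<Rightarrow> real) \<Rightarrow> (nat \<Rightarrow> real) \<Rightarrow> real" where
  "inner_n n x y = (\<Sum>i<n. x i * y i)"

definition norm_n :: "nat \<Rightarrow> (nat \<Rightarrow> real) \<Rightarrow> real" where
  "norm_n n x = sqrt (inner_n n x x)"

definition vsub :: "(nat \<Rightarrow> real) \<Rightarrow> (nat \<Rightarrow> real) \<Rightarrow> (nat \<Rightarrow> real)" where
  "vsub x y = (\<lambda>i. x i - y i)"

definition proj_n :: "nat \<Rightarrow> (nat \<Rightarrow> real) \<Rightarrow> (nat \<Rightarrow> real) \<Rightarrow> (nat \<Rightarrow> real)" where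
  "proj_n n a v = (\<lambda>i. inner_n n a v / (norm_n n a)\<^sup>2 * a i)"

definition Rn :: "nat \<Rightarrow> (nat \<Rightarrow> real) set" where
  "Rn n = PiE {..<n} (\<lambda>_. UNIV)"

definition gauss_out :: "nat \<Rightarrow> real \<Rightarrow> (nat \<Rightarrow> real) \<Rightarrow> (nat \<Rightarrow> real) measure" where
  "gauss_out n \<sigma> x = PiM {..<n} (\<lambda>i. density lborel (normal_density (x i) \<sigma>))"

definition Phi :: "real \<Rightarrow> real" where
  "Phi t = measure (density lborel std_normal_density) {..t}"

definition DI_code :: "nat \<Rightarrow> real \<Rightarrow> real \<Rightarrow> 'a set \<Rightarrow> real \<Rightarrow> real \<Rightarrow>
    ('a \<Rightarrow> (nat \<Rightarrow> real)) \<Rightarrow> ('a \<Rightarrow> (nat \<Rightarrow> real) set) \<Rightarrow> bool" where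
  "DI_code n \<sigma> P I l1 l2 u D \<longleftrightarrow> finite I \<and>
     (\<forall>i\<in>I. u i \<in> Rn n \<and> (norm_n n (u i))\<^sup>2 \<le> real n * P \<and>
        D i \<in> sets (gauss_out n \<sigma> (u i)) \<and>
        measure (gauss_out n \<sigma> (u i)) (D i) \<ge> 1 - l1) \<and>
     (\<forall>i\<in>I. \<forall>j\<in>I. i \<noteq> j \<longrightarrow> measure (gauss_out n \<sigma> (u j)) (D i) \<le> l2)"

definition angle_dense :: "nat \<Rightarrow> (nat \<Rightarrow> real) \<Rightarrow> ('a \<Rightarrow> (nat \<Rightarrow> real)) \<Rightarrow> 'a set \<Rightarrow> real \<Rightarrow> bool" where
  "angle_dense n c p J d \<longleftrightarrow>
     (\<forall>j\<in>J. \<forall>k\<in>J. j \<noteq> k \<longrightarrow>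
        norm_n n (vsub (proj_n n (vsub (p k) c) (vsub (p j) c)) (vsub (p k) c)) \<ge> d)"

definition achievable_lin_rate :: "real \<Rightarrow> real \<Rightarrow> real \<Rightarrow> bool" where
  "achievable_lin_rate \<sigma> P R \<longleftrightarrow> R > 0 \<and> (\<forall>\<epsilon>>0. \<exists>n0 (N :: nat \<Rightarrow> nat) l1 l2
     (u :: nat \<Rightarrow> nat \<Rightarrow> (nat \<Rightarrow> real)) D.
       (\<forall>n\<ge>n0. DI_code n \<sigma> P {..<N n} (l1 n) (l2 n) (u n) (D n) \<and>
                log 2 (real (N n)) / (real n * log 2 (real n)) \<ge> R - \<epsilon>) \<and>
       l1 \<longlonglongrightarrow> 0 \<and> l2 \<longlonglongrightarrow> 0)"

end

theory Submission
  imports Defs "HOL-Probability.Probability" "HOL-Real_Asymp.Real_Asymp"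
begin

lemma inner_comm: "inner_n n x y = inner_n n y x"
  unfolding inner_n_def by (simp add: mult.commute)

lemma inner_vsub_left: "inner_n n (vsub a b) c = inner_n n a c - inner_n n b c"
  unfolding inner_n_def vsub_def by (simp add: left_diff_distrib sum_subtractf)

lemma inner_vsub_right: "inner_n n c (vsub a b) = inner_n n c a - inner_n n c b"
  unfolding inner_n_def vsub_def by (simp add: right_diff_distrib sum_subtractf)

lemma inner_self_nonneg: "0 \<le> inner_n n x x"
  unfolding inner_n_def by (simp add: sum_nonneg)

lemma norm_sq: "(norm_n n x)\<^sup>2 = inner_n n x x"
  unfolding norm_n_def using inner_self_nonneg[of n x] by simp

lemma norm_nonneg: "0 \<le> norm_n n x"
  unfolding norm_n_def using inner_self_nonneg[of n x] by simp

lemma inner_cong: "(\<And>i. i < n \<Longrightarrow> x i = x' i) \<Longrightarrow> (\<And>i. i < n \<Longrightarrow> y i = y' i) \<Longrightarrow>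
   inner_n n x y = inner_n n x' y'"
  unfolding inner_n_def by (rule sum.cong) auto

lemma inner_restrict_left[simp]: "inner_n n (restrict f {..<n}) g = inner_n n f g"
  by (rule inner_cong) auto
lemma inner_restrict_right[simp]: "inner_n n g (restrict f {..<n}) = inner_n n g f"
  by (rule inner_cong) auto

lemma inner_scale_left: "inner_n n (\<lambda>i. c * x i) y = c * inner_n n x y"
  unfolding inner_n_def by (simp add: sum_distrib_left mult.assoc)
lemma inner_scale_right: "inner_n n y (\<lambda>i. c * x i) = c * inner_n n y x"
  unfolding inner_n_def by (simp add: sum_distrib_left mult.left_commute)

lemma inner_add_left: "inner_n n (\<lambda>i. a i + b i) c = inner_n n a c + inner_n n b c"
  unfolding inner_n_def by (simp add: distrib_right sum.distrib)
lemma inner_add_right: "inner_n n c (\<lambda>i. a i + b i) = inner_n n c a + inner_n n c b"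
  unfolding inner_n_def by (simp add: distrib_left sum.distrib)
lemma inner_diff_left: "inner_n n (\<lambda>i. a i - b i) c = inner_n n a c - inner_n n b c"
  using inner_vsub_left unfolding vsub_def .
lemma inner_diff_right: "inner_n n c (\<lambda>i. a i - b i) = inner_n n c a - inner_n n c b"
  using inner_vsub_right unfolding vsub_def .
lemma inner_neg_right: "inner_n n c (\<lambda>i. - a i) = - inner_n n c a"
  unfolding inner_n_def by (simp add: sum_negf)

lemma inner_vsub_self: "inner_n n (vsub a b) (vsub a b) = inner_n n a a - 2 * inner_n n a b + inner_n n b b"
  by (simp add: inner_vsub_left inner_vsub_right inner_comm[of n b a])

lemma CS: "\<bar>inner_n n a b\<bar> \<le> norm_n n a * norm_n n b"
proof -
  have "(inner_n n a b)\<^sup>2 \<le> inner_n n a a * inner_n n b b"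
    unfolding inner_n_def using Cauchy_Schwarz_ineq_sum[of a b "{..<n}"] by (simp add: power2_eq_square)
  also have "\<dots> = (norm_n n a * norm_n n b)\<^sup>2" by (simp add: power_mult_distrib norm_sq)
  finally show ?thesis using norm_nonneg[of n a] norm_nonneg[of n b]
    by (metis abs_le_square_iff abs_of_nonneg mult_nonneg_nonneg)
qed

lemma restrict_Rn[simp]: "restrict f {..<n} \<in> Rn n"
  unfolding Rn_def by auto

lemma angle_dense_from_sep:
  assumes r: "r > 0"
    and nm: "\<And>j. j \<in> J \<Longrightarrow> inner_n n (vsub (p j) c) (vsub (p j) c) = r\<^sup>2"
    and sep: "\<And>j k. j \<in> J \<Longrightarrow> k \<in> J \<Longrightarrow> j \<noteq> k \<Longrightarrow>
        2 * d * r \<le> inner_n n (vsub (vsub (p j) c) (vsub (p k) c)) (vsub (vsub (p j) c) (vsub (p k) c))"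
  shows "angle_dense n c p J d"
  unfolding angle_dense_def
proof (intro ballI impI)
  fix j k assume j: "j \<in> J" and k: "k \<in> J" and jk: "j \<noteq> k"
  define a where "a = vsub (p k) c"
  define b where "b = vsub (p j) c"
  have aa: "inner_n n a a = r\<^sup>2" using nm k a_def by simp
  have bb: "inner_n n b b = r\<^sup>2" using nm j b_def by simp
  have s: "2 * d * r \<le> r\<^sup>2 - 2 * inner_n n a b + r\<^sup>2"
    using sep[OF j k jk] unfolding inner_vsub_self a_def[symmetric] b_def[symmetric]
    using aa bb inner_comm[of n a b] by simp
  have na: "norm_n n a = r" using aa r unfolding norm_n_def by simp
  have pv: "vsub (proj_n n a b) a = (\<lambda>i. (inner_n n a b / r\<^sup>2 - 1) * a i)"
    unfolding vsub_def proj_n_def na by (auto simp: algebra_simps)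
  have "inner_n n (vsub (proj_n n a b) a) (vsub (proj_n n a b) a) = (inner_n n a b / r\<^sup>2 - 1)^2 * r\<^sup>2"
    unfolding pv inner_scale_left inner_scale_right aa by (simp add: power2_eq_square)
  hence "norm_n n (vsub (proj_n n a b) a) = \<bar>inner_n n a b / r\<^sup>2 - 1\<bar> * r"
    unfolding norm_n_def using r by (simp add: real_sqrt_mult)
  also have "\<dots> \<ge> d"
  proof -
    have "d * r + inner_n n a b \<le> r * r" using s by (simp add: power2_eq_square)
    hence "d * (r * r) + r * inner_n n a b \<le> r * (r * r)" using r
      by (metis distrib_left mult.left_commute mult_le_cancel_left_pos)
    hence "inner_n n a b / r\<^sup>2 - 1 \<le> - d / r" using r by (simp add: field_simps power2_eq_square)
    hence "\<bar>inner_n n a b / r\<^sup>2 - 1\<bar> \<ge> d / r" by linarith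
    thus ?thesis using r by (simp add: field_simps)
  qed
  finally show "d \<le> norm_n n (vsub (proj_n n (vsub (p k) c) (vsub (p j) c)) (vsub (p k) c))"
    unfolding a_def b_def .
qed

lemma space_gauss[simp]: "space (gauss_out n \<sigma> x) = Rn n"
  unfolding gauss_out_def Rn_def by (simp add: space_PiM)

lemma sets_gauss: "sets (gauss_out n \<sigma> x) = sets (PiM {..<n} (\<lambda>i. lborel))"
  unfolding gauss_out_def by (intro sets_PiM_cong) auto

lemma prob_gauss: "\<sigma> > 0 \<Longrightarrow> prob_space (gauss_out n \<sigma> x)"
  unfolding gauss_out_def
  by (intro prob_space_PiM prob_space_normal_density)

lemma indep_coords:
  assumes s: "\<sigma> > 0" and n0: "n \<noteq> 0"
  shows "prob_space.indep_vars (gauss_out n \<sigma> x) (\<lambda>i. density lborel (normal_density (x i) \<sigma>)) (\<lambda>i y. y i) {..<n}"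
proof -
  have False: "n \<noteq> 0" by fact
  interpret prob_space "gauss_out n \<sigma> x" by (rule prob_gauss[OF s])
  let ?M = "\<lambda>i. density lborel (normal_density (x i) \<sigma>)"
  show ?thesis
  proof (subst indep_vars_iff_distr_eq_PiM')
    show "{..<n} \<noteq> {}" using False by auto
    show "random_variable (?M i) (\<lambda>y. y i)" if "i \<in> {..<n}" for i
      unfolding gauss_out_def using that s by measurable
    have 1: "distr (gauss_out n \<sigma> x) (Pi\<^sub>M {..<n} ?M) (\<lambda>y. restrict (\<lambda>i. y i) {..<n}) = gauss_out n \<sigma> x"
    proof -
      have "distr (gauss_out n \<sigma> x) (Pi\<^sub>M {..<n} ?M) (\<lambda>y. restrict (\<lambda>i. y i) {..<n})
          = distr (gauss_out n \<sigma> x) (gauss_out n \<sigma> x) (\<lambda>y. y)"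
        by (intro distr_cong) (auto simp: gauss_out_def space_PiM PiE_def extensional_restrict)
      also have "\<dots> = gauss_out n \<sigma> x" by (rule distr_id)
      finally show ?thesis .
    qed
    have 2: "Pi\<^sub>M {..<n} (\<lambda>i. distr (gauss_out n \<sigma> x) (?M i) (\<lambda>y. y i)) = gauss_out n \<sigma> x"
      unfolding gauss_out_def
      by (intro PiM_cong refl distr_PiM_component prob_space_normal_density) (auto simp: s)
    show "distr (gauss_out n \<sigma> x) (Pi\<^sub>M {..<n} ?M) (\<lambda>y. restrict (\<lambda>i. y i) {..<n}) =
      Pi\<^sub>M {..<n} (\<lambda>i. distr (gauss_out n \<sigma> x) (?M i) (\<lambda>y. y i))" using 1 2 by simp
  qed
qed

lemma coord_distributed:
  assumes "i < n" and s: "\<sigma> > 0"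
  shows "distributed (gauss_out n \<sigma> x) lborel (\<lambda>y. y i) (normal_density (x i) \<sigma>)"
proof -
  let ?M = "\<lambda>i. density lborel (normal_density (x i) \<sigma>)"
  have "distr (gauss_out n \<sigma> x) lborel (\<lambda>y. y i) = distr (gauss_out n \<sigma> x) (?M i) (\<lambda>y. y i)"
    by (intro distr_cong) auto
  also have "\<dots> = ?M i" unfolding gauss_out_def
    by (intro distr_PiM_component prob_space_normal_density) (use assms in auto)
  finally show ?thesis unfolding distributed_def using assms
    by (auto simp: gauss_out_def)
qed

lemma gauss_main:
  assumes s: "\<sigma> > 0" and a: "inner_n n a a > 0"
  shows "measure (gauss_out n \<sigma> x) {y \<in> Rn n. inner_n n (vsub y x) a \<le> \<sigma> * norm_n n a * t} = Phi t"
proof -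
  let ?G = "gauss_out n \<sigma> x"
  interpret prob_space ?G by (rule prob_gauss[OF s])
  define J where "J = {i\<in>{..<n}. a i \<noteq> 0}"
  have fJ: "finite J" unfolding J_def by auto
  have J0: "J \<noteq> {}"
  proof
    assume "J = {}"
    hence "\<And>i. i < n \<Longrightarrow> a i = 0" unfolding J_def by auto
    hence "inner_n n a a = 0" unfolding inner_n_def by simp
    thus False using a by simp
  qed
  have ind: "indep_vars (\<lambda>i. borel) (\<lambda>i y. a i * (y i - x i)) J"
  proof -
    have "indep_vars (\<lambda>i. borel) (\<lambda>i y. (\<lambda>z. a i * (z - x i)) (y i)) {..<n}"
      by (rule indep_vars_compose2[OF indep_coords[OF s]]) (use J0 in \<open>auto simp: J_def\<close>)
    thus ?thesis by (rule indep_vars_subset) (auto simp: J_def)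
  qed
  have dist: "distributed ?G lborel (\<lambda>y. a i * (y i - x i)) (normal_density 0 (\<bar>a i\<bar> * \<sigma>))"
    if "i \<in> J" for i
  proof -
    have "distributed ?G lborel (\<lambda>y. (- a i * x i) + a i * y i) (normal_density ((- a i * x i) + a i * x i) (\<bar>a i\<bar> * \<sigma>))"
      by (rule normal_density_affine[OF coord_distributed[OF _ s] s]) (use that in \<open>auto simp: J_def\<close>)
    thus ?thesis by (simp add: algebra_simps)
  qed
  have sumd: "distributed ?G lborel (\<lambda>y. \<Sum>i\<in>J. a i * (y i - x i))
      (normal_density (\<Sum>i\<in>J. 0) (sqrt (\<Sum>i\<in>J. (\<bar>a i\<bar> * \<sigma>)\<^sup>2)))"
    by (rule sum_indep_normal[OF fJ J0 ind]) (use s dist in \<open>auto simp: J_def\<close>)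
  have eqsum: "(\<Sum>i\<in>J. a i * (y i - x i)) = inner_n n (vsub y x) a" for y
  proof -
    have "inner_n n (vsub y x) a = (\<Sum>i\<in>{..<n}. a i * (y i - x i))"
      unfolding inner_n_def vsub_def by (simp add: mult.commute)
    also have "\<dots> = (\<Sum>i\<in>J. a i * (y i - x i))"
      by (rule sum.mono_neutral_right) (auto simp: J_def)
    finally show ?thesis by simp
  qed
  have eqsig: "sqrt (\<Sum>i\<in>J. (\<bar>a i\<bar> * \<sigma>)\<^sup>2) = \<sigma> * norm_n n a"
  proof -
    have "(\<Sum>i\<in>J. (\<bar>a i\<bar> * \<sigma>)\<^sup>2) = \<sigma>\<^sup>2 * (\<Sum>i\<in>{..<n}. a i * a i)"
    proof -
      have "(\<Sum>i\<in>J. (\<bar>a i\<bar> * \<sigma>)\<^sup>2) = (\<Sum>i\<in>{..<n}. (\<bar>a i\<bar> * \<sigma>)\<^sup>2)"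
        by (rule sum.mono_neutral_left) (auto simp: J_def)
      also have "\<dots> = \<sigma>\<^sup>2 * (\<Sum>i\<in>{..<n}. a i * a i)"
        by (simp add: sum_distrib_left power_mult_distrib power2_eq_square[symmetric] mult.commute)
      finally show ?thesis .
    qed
    thus ?thesis unfolding norm_n_def inner_n_def using s by (simp add: real_sqrt_mult)
  qed
  have sp: "\<sigma> * norm_n n a > 0" using s a unfolding norm_n_def by simp
  have d2: "distributed ?G lborel (\<lambda>y. inner_n n (vsub y x) a) (normal_density 0 (\<sigma> * norm_n n a))"
    using sumd unfolding eqsum eqsig by simp
  have d3: "distributed ?G lborel (\<lambda>y. (inner_n n (vsub y x) a - 0) / (\<sigma> * norm_n n a)) std_normal_density"
    using d2 normal_standard_normal_convert[OF sp] by simp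
  let ?X = "\<lambda>y. (inner_n n (vsub y x) a - 0) / (\<sigma> * norm_n n a)"
  have "{y \<in> Rn n. inner_n n (vsub y x) a \<le> \<sigma> * norm_n n a * t} = ?X -` {..t} \<inter> space ?G"
    using sp by (auto simp: field_simps)
  hence "measure ?G {y \<in> Rn n. inner_n n (vsub y x) a \<le> \<sigma> * norm_n n a * t} = measure (distr ?G lborel ?X) {..t}"
    using d3 by (subst measure_distr) (auto simp: distributed_def)
  also have "\<dots> = Phi t" using d3 unfolding distributed_def Phi_def by simp
  finally show ?thesis .
qed

lemma meas_inner[measurable]: "(\<lambda>y. inner_n n (vsub y z) a) \<in> borel_measurable (gauss_out n \<sigma> x)"
  unfolding inner_n_def vsub_def gauss_out_def by measurable

lemma sets_gauss_Collect:
  assumes "Measurable.pred (gauss_out n \<sigma> x) P"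
  shows "{y \<in> Rn n. P y} \<in> sets (gauss_out n \<sigma> x)"
proof -
  have "{y \<in> Rn n. P y} = {y \<in> space (gauss_out n \<sigma> x). P y}" by simp
  also have "\<dots> \<in> sets (gauss_out n \<sigma> x)" using assms by measurable
  finally show ?thesis .
qed

lemma norm_neg: "norm_n n (\<lambda>i. - a i) = norm_n n a"
  unfolding norm_n_def inner_n_def by simp

lemma gauss_le:
  assumes s: "\<sigma> > 0" and a: "inner_n n a a > 0"
  shows "measure (gauss_out n \<sigma> x) {y \<in> Rn n. \<sigma> * norm_n n a * t < \<bar>inner_n n (vsub y x) a\<bar>} \<le> 2 * Phi (- t)"
proof -
  let ?G = "gauss_out n \<sigma> x"
  interpret prob_space ?G by (rule prob_gauss[OF s])
  let ?A = "{y \<in> Rn n. inner_n n (vsub y x) a \<le> \<sigma> * norm_n n a * (-t)}"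
  let ?B = "{y \<in> Rn n. inner_n n (vsub y x) (\<lambda>i. - a i) \<le> \<sigma> * norm_n n (\<lambda>i. - a i) * (-t)}"
  have a': "inner_n n (\<lambda>i. - a i) (\<lambda>i. - a i) > 0" using a unfolding inner_n_def by simp
  have sub: "{y \<in> Rn n. \<sigma> * norm_n n a * t < \<bar>inner_n n (vsub y x) a\<bar>} \<subseteq> ?A \<union> ?B"
    by (auto simp: norm_neg inner_neg_right)
  have "measure ?G {y \<in> Rn n. \<sigma> * norm_n n a * t < \<bar>inner_n n (vsub y x) a\<bar>} \<le> measure ?G (?A \<union> ?B)"
    by (rule finite_measure_mono[OF sub]) (intro sets.Un sets_gauss_Collect; measurable)
  also have "\<dots> \<le> measure ?G ?A + measure ?G ?B"
    by (rule measure_subadditive) (intro sets_gauss_Collect; measurable | simp)+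
  also have "\<dots> = 2 * Phi (-t)"
    using gauss_main[OF s a, of x "-t"] gauss_main[OF s a', of x "-t"] by simp
  finally show ?thesis .
qed

lemma gauss_ge:
  assumes s: "\<sigma> > 0" and a: "inner_n n a a > 0"
  shows "measure (gauss_out n \<sigma> x) {y \<in> Rn n. \<bar>inner_n n (vsub y x) a\<bar> \<le> \<sigma> * norm_n n a * t} \<ge> 1 - 2 * Phi (- t)"
proof -
  let ?G = "gauss_out n \<sigma> x"
  interpret prob_space ?G by (rule prob_gauss[OF s])
  let ?S = "{y \<in> Rn n. \<bar>inner_n n (vsub y x) a\<bar> \<le> \<sigma> * norm_n n a * t}"
  have S: "?S \<in> events" by (intro sets_gauss_Collect) measurable
  have "space ?G - ?S = {y \<in> Rn n. \<sigma> * norm_n n a * t < \<bar>inner_n n (vsub y x) a\<bar>}" by auto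
  hence "prob (space ?G - ?S) \<le> 2 * Phi (-t)" using gauss_le[OF s a, of x t] by simp
  thus ?thesis using prob_compl[OF S] by simp
qed

lemma gauss_shift:
  assumes s: "\<sigma> > 0" and a: "inner_n n a a > 0" and mu: "\<bar>\<mu>\<bar> \<ge> 2 * (\<sigma> * norm_n n a * t)"
  shows "measure (gauss_out n \<sigma> x) {y \<in> Rn n. \<bar>inner_n n (vsub y x) a + \<mu>\<bar> \<le> \<sigma> * norm_n n a * t} \<le> Phi (- t)"
proof -
  let ?G = "gauss_out n \<sigma> x"
  interpret prob_space ?G by (rule prob_gauss[OF s])
  let ?S = "{y \<in> Rn n. \<bar>inner_n n (vsub y x) a + \<mu>\<bar> \<le> \<sigma> * norm_n n a * t}"
  have a': "inner_n n (\<lambda>i. - a i) (\<lambda>i. - a i) > 0" using a unfolding inner_n_def by simp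
  have S: "?S \<in> events" by (intro sets_gauss_Collect) measurable
  show ?thesis
  proof (cases "\<mu> \<ge> 0")
    case True
    let ?A = "{y \<in> Rn n. inner_n n (vsub y x) a \<le> \<sigma> * norm_n n a * (-t)}"
    have "?S \<subseteq> ?A" using mu True by auto
    hence "prob ?S \<le> prob ?A" by (rule finite_measure_mono) (intro sets_gauss_Collect; measurable)
    thus ?thesis using gauss_main[OF s a, of x "-t"] by simp
  next
    case False
    let ?B = "{y \<in> Rn n. inner_n n (vsub y x) (\<lambda>i. - a i) \<le> \<sigma> * norm_n n (\<lambda>i. - a i) * (-t)}"
    have "?S \<subseteq> ?B" using mu False by (auto simp: norm_neg inner_neg_right)
    hence "prob ?S \<le> prob ?B" by (rule finite_measure_mono) (intro sets_gauss_Collect; measurable)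
    thus ?thesis using gauss_main[OF s a', of x "-t"] by simp
  qed
qed

lemma maximal_sep:
  assumes "finite S" and sym: "\<And>x y. F x y = F y x"
  shows "\<exists>C\<subseteq>S. (\<forall>x\<in>C. \<forall>y\<in>C. x \<noteq> y \<longrightarrow> F x y) \<and> (\<forall>z\<in>S. \<exists>c\<in>C. z = c \<or> \<not> F z c)"
  using assms(1)
proof (induction S rule: finite_induct)
  case empty
  then show ?case by auto
next
  case (insert a S)
  then obtain C where C: "C \<subseteq> S" "\<forall>x\<in>C. \<forall>y\<in>C. x \<noteq> y \<longrightarrow> F x y" "\<forall>z\<in>S. \<exists>c\<in>C. z = c \<or> \<not> F z c"
    by blast
  show ?case
  proof (cases "\<forall>c\<in>C. F a c")
    case True
    show ?thesis
      by (rule exI[of _ "insert a C"]) (use C True sym in auto)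
  next
    case False
    show ?thesis
      by (rule exI[of _ C]) (use C False in auto)
  qed
qed

definition sqi :: "nat \<Rightarrow> (nat \<Rightarrow> int) \<Rightarrow> int" where
  "sqi m z = (\<Sum>i<m. (z i)\<^sup>2)"

definition box :: "nat \<Rightarrow> int \<Rightarrow> (nat \<Rightarrow> int) set" where
  "box m q = PiE {..<m} (\<lambda>_. {-q..q})"

lemma finite_box[simp]: "finite (box m q)"
  unfolding box_def by (auto intro: finite_PiE)

lemma card_box: "q \<ge> 0 \<Longrightarrow> card (box m q) = nat (2*q+1) ^ m"
  unfolding box_def by (simp add: card_PiE)

lemma sqi_nonneg: "sqi m z \<ge> 0"
  unfolding sqi_def by (simp add: sum_nonneg)

lemma sqi_le: assumes "z \<in> box m q" shows "sqi m z \<le> int m * q\<^sup>2"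
proof -
  have "sqi m z \<le> (\<Sum>i<m. q\<^sup>2)" unfolding sqi_def
  proof (rule sum_mono)
    fix i assume i: "i \<in> {..<m}"
    have "z i \<in> {-q..q}" by (rule PiE_mem[OF assms[unfolded box_def] i])
    hence "\<bar>z i\<bar> \<le> q" by (simp add: abs_le_iff)
    hence "\<bar>z i\<bar>\<^sup>2 \<le> q\<^sup>2" by (rule power_mono) simp_all
    thus "(z i)\<^sup>2 \<le> q\<^sup>2" by (simp only: power2_abs)
  qed
  also have "(\<Sum>i<m. q\<^sup>2) = int m * q\<^sup>2" by simp
  finally show ?thesis .
qed

lemma sqi_pos: assumes "z \<in> box m q" "z \<noteq> restrict (\<lambda>_. 0) {..<m}" shows "sqi m z \<ge> 1"
proof -
  have "\<exists>i<m. z i \<noteq> 0"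
  proof (rule ccontr)
    assume "\<not> (\<exists>i<m. z i \<noteq> 0)"
    hence h: "\<forall>i<m. z i = 0" by simp
    have "z = restrict (\<lambda>_. 0) {..<m}"
    proof (rule ext)
      fix i show "z i = restrict (\<lambda>_. 0) {..<m} i"
      proof (cases "i < m")
        case True thus ?thesis using h by simp
      next
        case False thus ?thesis using PiE_arb[OF assms(1)[unfolded box_def]] by simp
      qed
    qed
    thus False using assms(2) by simp
  qed
  then obtain i where i: "i < m" "z i \<noteq> 0" by blast
  have "(z i)\<^sup>2 \<le> sqi m z" unfolding sqi_def
    by (rule member_le_sum) (use i in auto)
  moreover have "(z i)\<^sup>2 \<ge> 1"
  proof -
    have "\<bar>z i\<bar> \<ge> 1" using i(2) by linarith
    hence "1\<^sup>2 \<le> \<bar>z i\<bar>\<^sup>2" by (rule power_mono) simp_all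
    thus ?thesis by (simp only: power2_abs) simp
  qed
  ultimately show ?thesis by simp
qed

lemma geo_abs: "(\<Sum>k\<in>{-int N..int N}. (1/2::real)^(nat \<bar>k\<bar>)) = 3 - 2 * (1/2)^N"
proof (induction N)
  case 0
  then show ?case by simp
next
  case (Suc N)
  have e: "{-int (Suc N)..int (Suc N)} = insert (int (Suc N)) (insert (- int (Suc N)) {-int N..int N})"
    by auto
  have "(\<Sum>k\<in>{-int (Suc N)..int (Suc N)}. (1/2::real)^(nat \<bar>k\<bar>))
     = (1/2)^(Suc N) + ((1/2)^(Suc N) + (\<Sum>k\<in>{-int N..int N}. (1/2::real)^(nat \<bar>k\<bar>)))"
    unfolding e by (subst sum.insert; simp add: nat_add_distrib)+
  also have "\<dots> = 3 - 2 * (1/2)^(Suc N)" using Suc by simp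
  finally show ?case .
qed

lemma geo_sq: assumes "M \<ge> 0" shows "(\<Sum>k\<in>{-M..M}. (1/2::real)^(nat (k\<^sup>2))) \<le> 3"
proof -
  obtain N where N: "M = int N" using assms nonneg_eq_int by blast
  have "(\<Sum>k\<in>{-M..M}. (1/2::real)^(nat (k\<^sup>2))) \<le> (\<Sum>k\<in>{-M..M}. (1/2::real)^(nat \<bar>k\<bar>))"
  proof (rule sum_mono)
    fix k :: int
    have "\<bar>k\<bar> \<le> k\<^sup>2"
    proof (cases "k = 0")
      case False
      hence "\<bar>k\<bar> * 1 \<le> \<bar>k\<bar> * \<bar>k\<bar>" by (intro mult_left_mono) auto
      thus ?thesis by (simp add: power2_eq_square abs_mult_self_eq)
    qed simp
    hence "nat \<bar>k\<bar> \<le> nat (k\<^sup>2)" by simp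
    thus "(1/2::real)^(nat (k\<^sup>2)) \<le> (1/2)^(nat \<bar>k\<bar>)" by (rule power_decreasing) auto
  qed
  also have "\<dots> = 3 - 2 * (1/2)^N" unfolding N by (rule geo_abs)
  also have "\<dots> \<le> 3" by simp
  finally show ?thesis .
qed

lemma count_small:
  assumes M: "M \<ge> 0"
  shows "real (card {w \<in> box m M. sqi m w \<le> int L}) \<le> 2^L * 3^m"
proof -
  let ?W = "{w \<in> box m M. sqi m w \<le> int L}"
  let ?g = "\<lambda>w. (2::real)^L * (\<Prod>i<m. (1/2::real)^(nat ((w i)\<^sup>2)))"
  have g1: "1 \<le> ?g w" if w: "w \<in> ?W" for w
  proof -
    have "(\<Prod>i<m. (1/2::real)^(nat ((w i)\<^sup>2))) = (1/2)^(\<Sum>i<m. nat ((w i)\<^sup>2))"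
      by (simp add: power_sum)
    moreover have "(\<Sum>i<m. nat ((w i)\<^sup>2)) \<le> L"
    proof -
      have "int (\<Sum>i<m. nat ((w i)\<^sup>2)) = sqi m w" unfolding sqi_def by (simp add: of_nat_sum)
      hence "int (\<Sum>i<m. nat ((w i)\<^sup>2)) \<le> int L" using w by simp
      thus ?thesis by (simp only: of_nat_le_iff)
    qed
    hence "(1/2::real)^L \<le> (1/2)^(\<Sum>i<m. nat ((w i)\<^sup>2))" by (rule power_decreasing) auto
    ultimately have "(2::real)^L * (1/2)^L \<le> ?g w" by simp
    thus ?thesis by (simp add: power_mult_distrib[symmetric])
  qed
  have "real (card ?W) = (\<Sum>w\<in>?W. 1)" by simp
  also have "\<dots> \<le> (\<Sum>w\<in>?W. ?g w)" by (rule sum_mono) (rule g1)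
  also have "\<dots> \<le> (\<Sum>w\<in>box m M. ?g w)"
    by (rule sum_mono2) (auto intro!: mult_nonneg_nonneg prod_nonneg)
  also have "\<dots> = 2^L * (\<Sum>w\<in>box m M. \<Prod>i<m. (1/2::real)^(nat ((w i)\<^sup>2)))"
    by (simp add: sum_distrib_left)
  also have "(\<Sum>w\<in>box m M. \<Prod>i<m. (1/2::real)^(nat ((w i)\<^sup>2))) = (\<Prod>i<m. \<Sum>k\<in>{-M..M}. (1/2::real)^(nat (k\<^sup>2)))"
    unfolding box_def by (rule prod_sum_PiE[symmetric]) auto
  also have "\<dots> \<le> (\<Prod>i<m. 3)"
    by (rule prod_mono) (use geo_sq[OF M] in \<open>auto intro: sum_nonneg\<close>)
  finally show ?thesis by simp
qed

lemma pow_plus_one: fixes a :: real assumes "a \<ge> 0" "m \<ge> 1" shows "a^m + 1 \<le> (a+1)^m"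
  using assms(2)
proof (induction m rule: dec_induct)
  case base then show ?case by simp
next
  case (step k)
  have "(a+1)^(Suc k) = (a+1) * (a+1)^k" by simp
  also have "\<dots> \<ge> (a+1) * (a^k + 1)" using step assms(1) by (intro mult_left_mono) auto
  finally have "(a+1)^(Suc k) \<ge> a^(Suc k) + 1 + (a + a^k)" by (simp add: algebra_simps)
  moreover have "a + a^k \<ge> 0" using assms(1) by simp
  ultimately show ?case by linarith
qed

lemma sqi_diff_sym: "sqi m (\<lambda>i. z i - z' i) = sqi m (\<lambda>i. z' i - z i)"
  unfolding sqi_def by (rule sum.cong) (auto simp: power2_commute)

lemma packing:
  assumes m: "m \<ge> 1" and dpos: "0 < \<delta>" and dR: "\<delta> \<le> R"
  shows "\<exists>C. finite C \<and> C \<subseteq> Rn m \<and> (\<forall>x\<in>C. inner_n m x x = R\<^sup>2) \<and>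
     (\<forall>x\<in>C. \<forall>y\<in>C. x \<noteq> y \<longrightarrow> \<delta>\<^sup>2 \<le> inner_n m (vsub x y) (vsub x y)) \<and>
     (2*R/\<delta>)^m \<le> real (card C) * (2^(4*m) * 3^m) * (real m * (R/\<delta>+1)\<^sup>2)"
proof -
  have Rpos: "R > 0" using dpos dR by simp
  define q where "q = \<lceil>R/\<delta>\<rceil>"
  have q1: "real_of_int q \<ge> R/\<delta>" unfolding q_def by simp
  have q2: "real_of_int q \<le> R/\<delta> + 1" unfolding q_def by linarith
  have Rd1: "R/\<delta> \<ge> 1" using dpos dR by simp
  have qpos: "q \<ge> 1" using q1 Rd1 by linarith
  define zero :: "nat \<Rightarrow> int" where "zero = restrict (\<lambda>_. 0) {..<m}"
  have zb: "zero \<in> box m q" unfolding zero_def box_def using qpos by auto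
  define Ks where "Ks = {1..int m * q\<^sup>2}"
  define S where "S K = {z \<in> box m q. sqi m z = K}" for K
  have q21: "(1::int) \<le> q\<^sup>2" using qpos by (simp add: one_le_power)
  have "(1::int) * 1 \<le> int m * q\<^sup>2" by (rule mult_mono) (use m q21 in auto)
  hence fKs: "finite Ks" "Ks \<noteq> {}" unfolding Ks_def by auto
  have cover: "box m q - {zero} \<subseteq> (\<Union>K\<in>Ks. S K)"
  proof
    fix z assume z: "z \<in> box m q - {zero}"
    hence "sqi m z \<in> Ks" unfolding Ks_def using sqi_pos[of z m q] sqi_le[of z m q] zero_def by auto
    thus "z \<in> (\<Union>K\<in>Ks. S K)" unfolding S_def using z by auto
  qed
  define Mx where "Mx = Max ((\<lambda>K. card (S K)) ` Ks)"
  have "Mx \<in> (\<lambda>K. card (S K)) ` Ks" unfolding Mx_def using fKs by (intro Max_in) auto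
  then obtain K0 where K0: "K0 \<in> Ks" "card (S K0) = Mx" by (metis imageE)
  have Mxge: "card (S K) \<le> card (S K0)" if "K \<in> Ks" for K
    using K0 that fKs unfolding Mx_def by auto
  have "card (box m q - {zero}) \<le> card (\<Union>K\<in>Ks. S K)"
    by (rule card_mono[OF _ cover]) (use fKs in \<open>auto simp: S_def\<close>)
  also have "\<dots> \<le> (\<Sum>K\<in>Ks. card (S K))" by (rule card_UN_le[OF fKs(1)])
  also have "\<dots> \<le> (\<Sum>K\<in>Ks. card (S K0))" by (rule sum_mono) (rule Mxge)
  also have "\<dots> = nat (int m * q\<^sup>2) * card (S K0)" unfolding Ks_def by simp
  finally have c1: "card (box m q - {zero}) \<le> nat (int m * q\<^sup>2) * card (S K0)" .
  have cbox: "card (box m q - {zero}) = nat (2*q+1)^m - 1"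
    using zb card_box[of q m] qpos by (simp add: card_Diff_singleton)
  have "(2 * real_of_int q)^m + 1 \<le> (2 * real_of_int q + 1)^m"
    by (rule pow_plus_one) (use qpos m in auto)
  also have "(2 * real_of_int q + 1)^m = real (nat (2*q+1)^m)" using qpos by simp
  moreover have "1 \<le> nat (2*q+1)^m" using qpos by (simp add: one_le_power)
  ultimately have "(2 * real_of_int q)^m \<le> real (nat (2*q+1)^m - 1)"
    by (simp add: of_nat_diff)
  also have "\<dots> \<le> real (nat (int m * q\<^sup>2) * card (S K0))" using c1[unfolded cbox] by (simp only: of_nat_le_iff)
  also have "\<dots> = real m * (real_of_int q)\<^sup>2 * real (card (S K0))" using qpos by simp
  finally have c2: "(2 * real_of_int q)^m \<le> real m * (real_of_int q)\<^sup>2 * real (card (S K0))" .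
  have K0pos: "K0 \<ge> 1" using K0 unfolding Ks_def by auto
  have K0le: "K0 \<le> int m * q\<^sup>2" using K0 unfolding Ks_def by auto
  define T where "T = \<delta>\<^sup>2 * real_of_int K0 / R\<^sup>2"
  have T4: "T \<le> 4 * real m"
  proof -
    have "real_of_int K0 \<le> real m * (real_of_int q)\<^sup>2" using K0le
      by (metis of_int_le_iff of_int_mult of_int_of_nat_eq of_int_power)
    also have "\<dots> \<le> real m * (2*R/\<delta>)\<^sup>2"
      using q2 Rd1 qpos by (intro mult_left_mono power_mono) auto
    finally have "\<delta>\<^sup>2 * real_of_int K0 \<le> \<delta>\<^sup>2 * (real m * (2*R/\<delta>)\<^sup>2)"
      by (intro mult_left_mono) auto
    also have "\<dots> = 4 * real m * R\<^sup>2" using dpos by (simp add: field_simps power2_eq_square)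
    finally show ?thesis unfolding T_def using Rpos by (simp add: field_simps)
  qed
  define far where "far z z' = (T \<le> real_of_int (sqi m (\<lambda>i. z i - z' i)))" for z z' :: "nat \<Rightarrow> int"
  have fS: "finite (S K0)" unfolding S_def by simp
  obtain C' where C': "C' \<subseteq> S K0" "\<forall>x\<in>C'. \<forall>y\<in>C'. x \<noteq> y \<longrightarrow> far x y"
      "\<forall>z\<in>S K0. \<exists>c\<in>C'. z = c \<or> \<not> far z c"
    using maximal_sep[OF fS, of far] unfolding far_def using sqi_diff_sym by metis
  have fC': "finite C'" using C'(1) fS finite_subset by blast
  define W where "W = {w \<in> box m (2*q). sqi m w \<le> int (4*m)}"
  have cW: "real (card W) \<le> 2^(4*m) * 3^m" unfolding W_def using count_small[of "2*q" m "4*m"] qpos by simp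
  have near: "card {z \<in> S K0. z = c \<or> \<not> far z c} \<le> card W" if c: "c \<in> C'" for c
  proof -
    let ?f = "\<lambda>z. restrict (\<lambda>i. z i - c i) {..<m}"
    have cb: "c \<in> box m q" using c C'(1) unfolding S_def by auto
    have inj: "inj_on ?f {z \<in> S K0. z = c \<or> \<not> far z c}"
    proof (rule inj_onI)
      fix z z' assume z: "z \<in> {z \<in> S K0. z = c \<or> \<not> far z c}" and z': "z' \<in> {z \<in> S K0. z = c \<or> \<not> far z c}"
        and e: "?f z = ?f z'"
      have zb: "z \<in> box m q" "z' \<in> box m q" using z z' unfolding S_def by auto
      show "z = z'"
      proof (rule ext)
        fix i show "z i = z' i"
        proof (cases "i < m")
          case True thus ?thesis using fun_cong[OF e, of i] by simp
        next
          case False thus ?thesis using PiE_arb[OF zb(1)[unfolded box_def]] PiE_arb[OF zb(2)[unfolded box_def]] by simp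
        qed
      qed
    qed
    have img: "?f ` {z \<in> S K0. z = c \<or> \<not> far z c} \<subseteq> W"
    proof
      fix w assume "w \<in> ?f ` {z \<in> S K0. z = c \<or> \<not> far z c}"
      then obtain z where z: "z \<in> S K0" "z = c \<or> \<not> far z c" and w: "w = ?f z" by blast
      have zb: "z \<in> box m q" using z unfolding S_def by auto
      have wb: "w \<in> box m (2*q)" unfolding box_def w
      proof (rule restrict_PiE_iff[THEN iffD2], intro ballI)
        fix i assume i: "i \<in> {..<m}"
        have "z i \<in> {-q..q}" by (rule PiE_mem[OF zb[unfolded box_def] i])
        moreover have "c i \<in> {-q..q}" by (rule PiE_mem[OF cb[unfolded box_def] i])
        ultimately show "z i - c i \<in> {-(2*q)..2*q}" by simp
      qed
      have sw: "sqi m w = sqi m (\<lambda>i. z i - c i)" unfolding sqi_def w by (rule sum.cong) auto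
      have "sqi m (\<lambda>i. z i - c i) \<le> int (4*m)"
      proof (cases "z = c")
        case True thus ?thesis unfolding sqi_def by simp
      next
        case False
        hence "real_of_int (sqi m (\<lambda>i. z i - c i)) < T" using z(2) unfolding far_def by simp
        hence "real_of_int (sqi m (\<lambda>i. z i - c i)) < real_of_int (int (4*m))" using T4 by simp
        thus ?thesis by (simp only: of_int_less_iff)
      qed
      thus "w \<in> W" unfolding W_def using wb sw by simp
    qed
    have "card {z \<in> S K0. z = c \<or> \<not> far z c} = card (?f ` {z \<in> S K0. z = c \<or> \<not> far z c})"
      by (rule card_image[OF inj, symmetric])
    also have "\<dots> \<le> card W" by (rule card_mono[OF _ img]) (simp add: W_def)
    finally show ?thesis .
  qed
  have "S K0 \<subseteq> (\<Union>c\<in>C'. {z \<in> S K0. z = c \<or> \<not> far z c})" using C'(3) by blast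
  hence "card (S K0) \<le> card (\<Union>c\<in>C'. {z \<in> S K0. z = c \<or> \<not> far z c})"
    by (intro card_mono) (use fC' fS in auto)
  also have "\<dots> \<le> (\<Sum>c\<in>C'. card {z \<in> S K0. z = c \<or> \<not> far z c})" by (rule card_UN_le[OF fC'])
  also have "\<dots> \<le> (\<Sum>c\<in>C'. card W)" by (rule sum_mono) (rule near)
  finally have c3: "card (S K0) \<le> card C' * card W" by simp
  define s where "s = R / sqrt (real_of_int K0)"
  have spos: "s > 0" unfolding s_def using Rpos K0pos by simp
  have s2: "s\<^sup>2 = R\<^sup>2 / real_of_int K0" unfolding s_def using K0pos by (simp add: power_divide)
  define \<phi> where "\<phi> z = restrict (\<lambda>i. s * real_of_int (z i)) {..<m}" for z :: "nat \<Rightarrow> int"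
  have inner\<phi>: "inner_n m (vsub (\<phi> z) (\<phi> z')) (vsub (\<phi> z) (\<phi> z')) = s\<^sup>2 * real_of_int (sqi m (\<lambda>i. z i - z' i))" for z z'
    unfolding inner_n_def vsub_def \<phi>_def sqi_def
    by (simp add: sum_distrib_left power2_eq_square algebra_simps)
  have inner\<phi>1: "inner_n m (\<phi> z) (\<phi> z) = s\<^sup>2 * real_of_int (sqi m z)" for z
    unfolding inner_n_def \<phi>_def sqi_def
    by (simp add: sum_distrib_left power2_eq_square algebra_simps)
  have inj\<phi>: "inj_on \<phi> C'"
  proof (rule inj_onI)
    fix z z' assume z: "z \<in> C'" and z': "z' \<in> C'" and e: "\<phi> z = \<phi> z'"
    have zb: "z \<in> box m q" "z' \<in> box m q" using z z' C'(1) unfolding S_def by auto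
    show "z = z'"
    proof (rule ext)
      fix i show "z i = z' i"
      proof (cases "i < m")
        case True thus ?thesis using fun_cong[OF e, of i] spos unfolding \<phi>_def by simp
      next
        case False thus ?thesis using PiE_arb[OF zb(1)[unfolded box_def]] PiE_arb[OF zb(2)[unfolded box_def]] by simp
      qed
    qed
  qed
  show ?thesis
  proof (intro exI conjI ballI impI)
    show "finite (\<phi> ` C')" using fC' by simp
    show "\<phi> ` C' \<subseteq> Rn m" unfolding \<phi>_def by auto
    fix x assume "x \<in> \<phi> ` C'"
    then obtain z where z: "z \<in> C'" "x = \<phi> z" by blast
    have "sqi m z = K0" using z C'(1) unfolding S_def by auto
    thus "inner_n m x x = R\<^sup>2" unfolding z inner\<phi>1 s2 using K0pos by simp
  next
    fix x y assume x: "x \<in> \<phi> ` C'" and y: "y \<in> \<phi> ` C'" and xy: "x \<noteq> y"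
    obtain z where z: "z \<in> C'" "x = \<phi> z" using x by blast
    obtain z' where z': "z' \<in> C'" "y = \<phi> z'" using y by blast
    have "z \<noteq> z'" using xy z z' by auto
    hence "T \<le> real_of_int (sqi m (\<lambda>i. z i - z' i))" using C'(2) z z' unfolding far_def by auto
    hence "s\<^sup>2 * T \<le> s\<^sup>2 * real_of_int (sqi m (\<lambda>i. z i - z' i))" by (intro mult_left_mono) auto
    moreover have "s\<^sup>2 * T = \<delta>\<^sup>2" unfolding s2 T_def using K0pos Rpos by (simp add: field_simps)
    ultimately show "\<delta>\<^sup>2 \<le> inner_n m (vsub x y) (vsub x y)" unfolding z z' inner\<phi> by simp
  next
    have cC: "card (\<phi> ` C') = card C'" by (rule card_image[OF inj\<phi>])
    have "(2*R/\<delta>)^m \<le> (2 * real_of_int q)^m"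
      using q1 dpos Rpos by (intro power_mono) (auto simp: field_simps)
    also have "\<dots> \<le> real m * (real_of_int q)\<^sup>2 * real (card (S K0))" by (rule c2)
    also have "\<dots> \<le> real m * (R/\<delta>+1)\<^sup>2 * (real (card C') * (2^(4*m) * 3^m))"
    proof (rule mult_mono)
      show "real m * (real_of_int q)\<^sup>2 \<le> real m * (R/\<delta>+1)\<^sup>2"
        using q2 qpos by (intro mult_left_mono power_mono) auto
      have "real (card (S K0)) \<le> real (card C' * card W)" using c3 by (simp only: of_nat_le_iff)
      also have "\<dots> \<le> real (card C') * (2^(4*m) * 3^m)" using cW by (simp add: mult_left_mono)
      finally show "real (card (S K0)) \<le> real (card C') * (2^(4*m) * 3^m)" .
    qed auto
    finally show "(2*R/\<delta>)^m \<le> real (card (\<phi> ` C')) * (2^(4*m) * 3^m) * (real m * (R/\<delta>+1)\<^sup>2)"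
      unfolding cC by (simp add: mult_ac)
  qed
qed

lemma inner_split: "inner_n n (vsub y o') a = inner_n n (vsub y u) a + inner_n n (vsub u o') a"
  by (simp add: inner_vsub_left)

lemma norm_of_inner: "inner_n n a a = r\<^sup>2 \<Longrightarrow> r \<ge> 0 \<Longrightarrow> norm_n n a = r"
  unfolding norm_n_def by simp

lemma prob_inter_ge:
  assumes "prob_space M" "A \<in> sets M" "B \<in> sets M"
  shows "measure M (A \<inter> B) \<ge> measure M A + measure M B - 1"
proof -
  interpret prob_space M by fact
  have e: "space M - (A \<inter> B) = (space M - A) \<union> (space M - B)" by auto
  have "prob ((space M - A) \<union> (space M - B)) \<le> prob (space M - A) + prob (space M - B)"
    by (rule measure_subadditive) (use assms in auto)
  hence "prob (space M - (A \<inter> B)) \<le> prob (space M - A) + prob (space M - B)" unfolding e .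
  thus ?thesis using prob_compl assms by (simp add: sets.Int)
qed

lemma DI_from_geom:
  fixes o1 :: "nat \<Rightarrow> nat \<Rightarrow> real" and o2 :: "nat \<Rightarrow> nat \<Rightarrow> nat \<Rightarrow> real"
  assumes s: "\<sigma> > 0" and r1: "r1 > 0" and r2: "r2 > 0" and t: "t \<ge> 0"
    and o1R: "\<And>s1. s1 < N1 \<Longrightarrow> inner_n n (o1 s1) (o1 s1) = r1\<^sup>2"
    and sep1: "\<And>s1 s1'. s1 < N1 \<Longrightarrow> s1' < N1 \<Longrightarrow> s1 \<noteq> s1' \<Longrightarrow>
        2 * d * r1 \<le> inner_n n (vsub (o1 s1) (o1 s1')) (vsub (o1 s1) (o1 s1'))"
    and o2R: "\<And>s1 s2. s1 < N1 \<Longrightarrow> s2 < N2 \<Longrightarrow> o2 s1 s2 \<in> Rn n \<and>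
        inner_n n (vsub (o2 s1 s2) (o1 s1)) (vsub (o2 s1 s2) (o1 s1)) = r2\<^sup>2 \<and>
        inner_n n (vsub (o2 s1 s2) (o1 s1)) (o1 s1) = 0"
    and sep2: "\<And>s1 s2 s2'. s1 < N1 \<Longrightarrow> s2 < N2 \<Longrightarrow> s2' < N2 \<Longrightarrow> s2 \<noteq> s2' \<Longrightarrow>
        2 * d * r2 \<le> inner_n n (vsub (vsub (o2 s1 s2) (o1 s1)) (vsub (o2 s1 s2') (o1 s1)))
                               (vsub (vsub (o2 s1 s2) (o1 s1)) (vsub (o2 s1 s2') (o1 s1)))"
    and dt: "2 * \<sigma> * t \<le> d"
    and cross: "2 * r2\<^sup>2 + 2 * \<sigma> * t * r1 \<le> 3/4 * d * r1"
    and pow: "r1\<^sup>2 + r2\<^sup>2 \<le> real n * P"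
  shows "DI_code n \<sigma> P ({..<N1} \<times> {..<N2}) (2 * (2 * Phi (- t))) (2 * Phi (- t))
          (\<lambda>(s1, s2). o2 s1 s2)
          (\<lambda>(s1, s2). {y \<in> Rn n.
             \<bar>inner_n n (vsub y (o1 s1)) (o1 s1)\<bar> / r1 \<le> \<sigma> * t \<and>
             \<bar>inner_n n (vsub y (o2 s1 s2)) (vsub (o2 s1 s2) (o1 s1))\<bar> / r2 \<le> \<sigma> * t})"
proof -
  define D where "D s1 s2 = {y \<in> Rn n.
             \<bar>inner_n n (vsub y (o1 s1)) (o1 s1)\<bar> / r1 \<le> \<sigma> * t \<and>
             \<bar>inner_n n (vsub y (o2 s1 s2)) (vsub (o2 s1 s2) (o1 s1))\<bar> / r2 \<le> \<sigma> * t}" for s1 s2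
  have Phi0: "Phi x \<ge> 0" for x unfolding Phi_def by simp
  have n1: "norm_n n (o1 s1) = r1" if "s1 < N1" for s1 using o1R[OF that] r1 by (intro norm_of_inner) auto
  have n2: "norm_n n (vsub (o2 s1 s2) (o1 s1)) = r2" if "s1 < N1" "s2 < N2" for s1 s2
    using o2R[OF that] r2 by (intro norm_of_inner) auto
  have Dmeas: "D s1 s2 \<in> sets (gauss_out n \<sigma> x)" for s1 s2 x
    unfolding D_def by (intro sets_gauss_Collect) measurable
  have type1: "measure (gauss_out n \<sigma> (o2 s1 s2)) (D s1 s2) \<ge> 1 - 2 * (2 * Phi (- t))"
    if st: "s1 < N1" "s2 < N2" for s1 s2
  proof -
    let ?u = "o2 s1 s2" and ?o = "o1 s1" let ?h = "vsub ?u ?o"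
    let ?A1 = "{y \<in> Rn n. \<bar>inner_n n (vsub y ?u) ?o\<bar> \<le> \<sigma> * norm_n n ?o * t}"
    let ?A2 = "{y \<in> Rn n. \<bar>inner_n n (vsub y ?u) ?h\<bar> \<le> \<sigma> * norm_n n ?h * t}"
    have hO: "inner_n n ?h ?o = 0" using o2R[OF st] by simp
    have deq: "D s1 s2 = ?A1 \<inter> ?A2"
    proof -
      have "inner_n n (vsub y ?o) ?o = inner_n n (vsub y ?u) ?o" for y
        using hO by (simp add: inner_vsub_left)
      thus ?thesis unfolding D_def n1[OF st(1)] n2[OF st] using r1 r2
        by (auto simp: field_simps mult.commute mult.left_commute)
    qed
    have m1: "measure (gauss_out n \<sigma> ?u) ?A1 \<ge> 1 - 2 * Phi (-t)"
      by (rule gauss_ge[OF s]) (use o1R[OF st(1)] r1 in simp)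
    have m2: "measure (gauss_out n \<sigma> ?u) ?A2 \<ge> 1 - 2 * Phi (-t)"
      by (rule gauss_ge[OF s]) (use o2R[OF st] r2 in simp)
    have m3: "measure (gauss_out n \<sigma> ?u) (?A1 \<inter> ?A2) \<ge>
        measure (gauss_out n \<sigma> ?u) ?A1 + measure (gauss_out n \<sigma> ?u) ?A2 - 1"
      by (rule prob_inter_ge[OF prob_gauss[OF s]]) (intro sets_gauss_Collect; measurable)+
    show ?thesis unfolding deq using m1 m2 m3 by linarith
  qed
  have type2: "measure (gauss_out n \<sigma> (o2 s1' s2')) (D s1 s2) \<le> 2 * Phi (- t)"
    if st: "s1 < N1" "s2 < N2" "s1' < N1" "s2' < N2" "(s1, s2) \<noteq> (s1', s2')" for s1 s2 s1' s2'
  proof -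
    let ?u' = "o2 s1' s2'"
    let ?G = "gauss_out n \<sigma> ?u'"
    interpret prob_space ?G by (rule prob_gauss[OF s])
    have "measure ?G (D s1 s2) \<le> Phi (-t)"
    proof (cases "s1 = s1'")
      case False
      let ?o = "o1 s1" and ?o' = "o1 s1'"
      let ?h' = "vsub ?u' ?o'"
      define \<mu> where "\<mu> = inner_n n (vsub ?u' ?o) ?o"
      define e where "e = vsub ?o ?o'"
      have oo: "inner_n n ?o ?o = r1\<^sup>2" "inner_n n ?o' ?o' = r1\<^sup>2" using o1R st by auto
      have hh: "inner_n n ?h' ?h' = r2\<^sup>2" "inner_n n ?h' ?o' = 0" using o2R[OF st(3,4)] by auto
      have E: "2 * d * r1 \<le> inner_n n e e" unfolding e_def using sep1[OF st(1,3) False] .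
      have ee: "inner_n n e e = 2 * r1\<^sup>2 - 2 * inner_n n ?o ?o'"
        unfolding e_def inner_vsub_self oo inner_comm[of n ?o' ?o] by simp
      have mu: "\<mu> = inner_n n ?h' e - inner_n n e e / 2"
      proof -
        have "\<mu> = inner_n n ?h' ?o + inner_n n (vsub ?o' ?o) ?o"
          unfolding \<mu>_def by (simp add: inner_vsub_left)
        also have "inner_n n ?h' ?o = inner_n n ?h' e"
          unfolding e_def inner_vsub_right using hh by simp
        also have "inner_n n (vsub ?o' ?o) ?o = - inner_n n e e / 2"
          unfolding ee inner_vsub_left oo by (simp add: inner_comm)
        finally show ?thesis by simp
      qed
      have cs: "\<bar>inner_n n ?h' e\<bar> \<le> r2 * sqrt (inner_n n e e)"
        using CS[of n ?h' e] hh r2 unfolding norm_n_def by simp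
      define \<delta> where "\<delta> = sqrt (inner_n n e e)"
      have d2: "\<delta>\<^sup>2 = inner_n n e e" unfolding \<delta>_def using inner_self_nonneg[of n e] by simp
      have amgm: "r2 * \<delta> \<le> \<delta>\<^sup>2 / 8 + 2 * r2\<^sup>2"
      proof -
        have "0 \<le> (\<delta> - 4 * r2)\<^sup>2" by simp
        thus ?thesis by (simp add: power2_eq_square algebra_simps)
      qed
      have "\<bar>\<mu>\<bar> \<ge> 3/8 * \<delta>\<^sup>2 - 2 * r2\<^sup>2"
        using mu cs amgm d2 unfolding \<delta>_def[symmetric] by (simp add: abs_if split: if_splits)
      hence mu2: "\<bar>\<mu>\<bar> \<ge> 2 * (\<sigma> * norm_n n ?o * t)"
        using E d2 cross n1[OF st(1)] by (simp add: algebra_simps)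
      have "D s1 s2 \<subseteq> {y \<in> Rn n. \<bar>inner_n n (vsub y ?u') ?o + \<mu>\<bar> \<le> \<sigma> * norm_n n ?o * t}"
      proof
        fix y assume y: "y \<in> D s1 s2"
        have "inner_n n (vsub y ?o) ?o = inner_n n (vsub y ?u') ?o + \<mu>"
          unfolding \<mu>_def by (rule inner_split)
        thus "y \<in> {y \<in> Rn n. \<bar>inner_n n (vsub y ?u') ?o + \<mu>\<bar> \<le> \<sigma> * norm_n n ?o * t}"
          using y r1 unfolding D_def n1[OF st(1)] by (auto simp: field_simps mult.commute mult.left_commute)
      qed
      hence "measure ?G (D s1 s2) \<le> measure ?G {y \<in> Rn n. \<bar>inner_n n (vsub y ?u') ?o + \<mu>\<bar> \<le> \<sigma> * norm_n n ?o * t}"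
        by (rule finite_measure_mono) (intro sets_gauss_Collect; measurable)
      also have "\<dots> \<le> Phi (-t)"
        by (rule gauss_shift[OF s _ mu2]) (use oo r1 in simp)
      finally show ?thesis .
    next
      case True
      hence s2ne: "s2 \<noteq> s2'" using st(5) by simp
      let ?o = "o1 s1"
      let ?u = "o2 s1 s2"
      let ?h = "vsub ?u ?o" and ?h' = "vsub ?u' ?o"
      define \<mu> where "\<mu> = inner_n n (vsub ?u' ?u) ?h"
      have hh: "inner_n n ?h ?h = r2\<^sup>2" "inner_n n ?h' ?h' = r2\<^sup>2"
        using o2R[OF st(1,2)] o2R[OF st(1,4)] True by auto
      have E: "2 * d * r2 \<le> inner_n n (vsub ?h' ?h) (vsub ?h' ?h)"
        using sep2[OF st(1) st(4) st(2)] s2ne True by auto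
      have mu: "\<mu> = - inner_n n (vsub ?h' ?h) (vsub ?h' ?h) / 2"
      proof -
        have "\<mu> = inner_n n ?h' ?h - inner_n n ?h ?h"
          unfolding \<mu>_def True by (simp add: inner_vsub_left)
        moreover have "inner_n n (vsub ?h' ?h) (vsub ?h' ?h) = inner_n n ?h' ?h' - 2 * inner_n n ?h' ?h + inner_n n ?h ?h"
          by (rule inner_vsub_self)
        ultimately show ?thesis using hh by simp
      qed
      have mu2: "\<bar>\<mu>\<bar> \<ge> 2 * (\<sigma> * norm_n n ?h * t)"
      proof -
        have "\<bar>\<mu>\<bar> \<ge> d * r2" using mu E by simp
        moreover have "d * r2 \<ge> 2 * \<sigma> * t * r2" using dt r2 by (intro mult_right_mono) auto
        ultimately show ?thesis using n2[OF st(1,2)] by (simp add: mult_ac)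
      qed
      have "D s1 s2 \<subseteq> {y \<in> Rn n. \<bar>inner_n n (vsub y ?u') ?h + \<mu>\<bar> \<le> \<sigma> * norm_n n ?h * t}"
      proof
        fix y assume y: "y \<in> D s1 s2"
        have "inner_n n (vsub y ?u) ?h = inner_n n (vsub y ?u') ?h + \<mu>"
          unfolding \<mu>_def by (rule inner_split)
        thus "y \<in> {y \<in> Rn n. \<bar>inner_n n (vsub y ?u') ?h + \<mu>\<bar> \<le> \<sigma> * norm_n n ?h * t}"
          using y r2 unfolding D_def n2[OF st(1,2)] by (auto simp: field_simps mult.commute mult.left_commute)
      qed
      hence "measure ?G (D s1 s2) \<le> measure ?G {y \<in> Rn n. \<bar>inner_n n (vsub y ?u') ?h + \<mu>\<bar> \<le> \<sigma> * norm_n n ?h * t}"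
        by (rule finite_measure_mono) (intro sets_gauss_Collect; measurable)
      also have "\<dots> \<le> Phi (-t)"
        by (rule gauss_shift[OF s _ mu2]) (use hh r2 in simp)
      finally show ?thesis .
    qed
    thus ?thesis using Phi0[of "-t"] by linarith
  qed
  have power: "(norm_n n (o2 s1 s2))\<^sup>2 \<le> real n * P" if st: "s1 < N1" "s2 < N2" for s1 s2
  proof -
    let ?u = "o2 s1 s2" and ?o = "o1 s1" let ?h = "vsub ?u ?o"
    have a: "inner_n n ?h ?h = inner_n n ?u ?u - 2 * inner_n n ?u ?o + inner_n n ?o ?o"
      by (rule inner_vsub_self)
    have b: "inner_n n ?h ?o = inner_n n ?u ?o - inner_n n ?o ?o" by (rule inner_vsub_left)
    have "inner_n n ?u ?u = inner_n n ?h ?h + 2 * inner_n n ?h ?o + inner_n n ?o ?o"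
      using a b by linarith
    also have "\<dots> = r2\<^sup>2 + r1\<^sup>2" using o2R[OF st] o1R[OF st(1)] by simp
    finally show ?thesis using pow unfolding norm_sq by simp
  qed
  show ?thesis
    unfolding DI_code_def D_def[symmetric]
  proof (intro conjI ballI impI)
    show "finite ({..<N1} \<times> {..<N2})" by simp
  next
    fix i assume i: "i \<in> {..<N1} \<times> {..<N2}"
    obtain s1 s2 where i': "i = (s1, s2)" "s1 < N1" "s2 < N2" using i by auto
    show "(case i of (s1, s2) \<Rightarrow> o2 s1 s2) \<in> Rn n" using o2R i' by simp
    show "(norm_n n (case i of (s1, s2) \<Rightarrow> o2 s1 s2))\<^sup>2 \<le> real n * P" using power i' by simp
    show "(case i of (s1, s2) \<Rightarrow> D s1 s2) \<in> sets (gauss_out n \<sigma> (case i of (s1, s2) \<Rightarrow> o2 s1 s2))"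
      using Dmeas i' by simp
    show "1 - 2 * (2 * Phi (- t)) \<le> measure (gauss_out n \<sigma> (case i of (s1, s2) \<Rightarrow> o2 s1 s2)) (case i of (s1, s2) \<Rightarrow> D s1 s2)"
      using type1 i' by simp
  next
    fix i j assume i: "i \<in> {..<N1} \<times> {..<N2}" and j: "j \<in> {..<N1} \<times> {..<N2}" and ij: "i \<noteq> j"
    obtain s1 s2 where i': "i = (s1, s2)" "s1 < N1" "s2 < N2" using i by auto
    obtain s1' s2' where j': "j = (s1', s2')" "s1' < N1" "s2' < N2" using j by auto
    show "measure (gauss_out n \<sigma> (case j of (s1, s2) \<Rightarrow> o2 s1 s2)) (case i of (s1, s2) \<Rightarrow> D s1 s2) \<le> 2 * Phi (- t)"
      using type2[of s1 s2 s1' s2'] i' j' ij by simp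
  qed
qed

definition hv :: "(nat \<Rightarrow> real) \<Rightarrow> real \<Rightarrow> nat \<Rightarrow> real" where
  "hv o' r = (\<lambda>i. o' i - (if i = 0 then r else 0))"

definition hh :: "nat \<Rightarrow> (nat \<Rightarrow> real) \<Rightarrow> real \<Rightarrow> (nat \<Rightarrow> real) \<Rightarrow> (nat \<Rightarrow> real)" where
  "hh n o' r a = restrict (\<lambda>i. a i - (2 * inner_n n (hv o' r) a / inner_n n (hv o' r) (hv o' r)) * hv o' r i) {..<n}"

definition emb :: "nat \<Rightarrow> (nat \<Rightarrow> real) \<Rightarrow> (nat \<Rightarrow> real)" where
  "emb n w = restrict (\<lambda>i. if i = 0 then 0 else w (i - 1)) {..<n}"

lemma inner_delta0: "n \<ge> 1 \<Longrightarrow> inner_n n (\<lambda>i. if i = 0 then r else 0) a = r * a 0"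
proof -
  assume n: "n \<ge> 1"
  have "inner_n n (\<lambda>i. if i = 0 then r else 0) a = (\<Sum>i<n. if i = 0 then r * a i else 0)"
    unfolding inner_n_def by (rule sum.cong) auto
  also have "\<dots> = r * a 0" using n by (simp add: sum.delta)
  finally show ?thesis .
qed

lemma inner_hv: "n \<ge> 1 \<Longrightarrow> inner_n n (hv o' r) a = inner_n n o' a - r * a 0"
  unfolding hv_def by (simp add: inner_diff_left inner_delta0)

lemma inner_lin:
  "inner_n n (\<lambda>i. a i - \<alpha> * v i) (\<lambda>i. b i - \<beta> * v i) =
   inner_n n a b - \<beta> * inner_n n a v - \<alpha> * inner_n n v b + \<alpha> * \<beta> * inner_n n v v"
  unfolding inner_n_def
  by (simp add: algebra_simps sum.distrib sum_subtractf sum_distrib_left)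

lemma hh_inner:
  "inner_n n (hh n o' r a) (hh n o' r b) = inner_n n a b"
proof -
  define v where "v = hv o' r"
  define k where "k = inner_n n v v"
  have "inner_n n (hh n o' r a) (hh n o' r b) =
      inner_n n (\<lambda>i. a i - (2 * inner_n n v a / k) * v i) (\<lambda>i. b i - (2 * inner_n n v b / k) * v i)"
    unfolding hh_def v_def k_def by simp
  also have "\<dots> = inner_n n a b" unfolding inner_lin k_def[symmetric]
    by (cases "k = 0") (simp_all add: field_simps inner_comm[of n a v] power2_eq_square)
  finally show ?thesis .
qed

lemma hh_inner_o:
  assumes n: "n \<ge> 1" and oo: "inner_n n o' o' = r\<^sup>2"
  shows "inner_n n (hh n o' r a) o' = r * a 0"
proof -
  define v where "v = hv o' r"
  define k where "k = inner_n n v v"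
  have vo: "inner_n n v o' = r\<^sup>2 - r * o' 0" unfolding v_def using inner_hv[OF n] oo by simp
  have va: "inner_n n v a = inner_n n a o' - r * a 0" unfolding v_def using inner_hv[OF n] inner_comm by metis
  have k: "k = 2 * (r\<^sup>2 - r * o' 0)"
  proof -
    have "k = inner_n n o' v - r * v 0" unfolding k_def using inner_hv[OF n] v_def by metis
    also have "inner_n n o' v = r\<^sup>2 - r * o' 0" using vo inner_comm by metis
    also have "v 0 = o' 0 - r" unfolding v_def hv_def by simp
    finally show ?thesis by (simp add: algebra_simps power2_eq_square)
  qed
  have "inner_n n (hh n o' r a) o' = inner_n n (\<lambda>i. a i - (2 * inner_n n v a / k) * v i) o'"
    unfolding hh_def v_def k_def by simp
  also have "\<dots> = inner_n n a o' - (2 * inner_n n v a / k) * inner_n n v o'"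
    by (simp only: inner_diff_left inner_scale_left)
  also have "\<dots> = r * a 0"
  proof (cases "k = 0")
    case True
    hence "inner_n n a o' - r * a 0 = 0"
    proof -
      have "inner_n n v v = 0" using True k_def by simp
      hence "\<forall>i\<in>{..<n}. v i * v i = 0" unfolding inner_n_def
        by (subst (asm) sum_nonneg_eq_0_iff) auto
      hence "\<forall>i<n. v i = 0" by simp
      hence "inner_n n v a = 0" unfolding inner_n_def by simp
      thus ?thesis using va by simp
    qed
    thus ?thesis using True by simp
  next
    case False
    thus ?thesis unfolding va vo k using False k by (simp add: field_simps power2_eq_square)
  qed
  finally show ?thesis .
qed

lemma emb0: "n \<ge> 1 \<Longrightarrow> emb n w 0 = 0"
  unfolding emb_def by simp

lemma inner_emb:
  assumes n: "n \<ge> 1"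
  shows "inner_n n (emb n w) (emb n w') = inner_n (n - 1) w w'"
proof -
  obtain k where k: "n = Suc k" using n by (cases n) auto
  have "inner_n n (emb n w) (emb n w') = (\<Sum>i<Suc k. (if i = 0 then 0 else w (i - 1)) * (if i = 0 then 0 else w' (i - 1)))"
    unfolding inner_n_def emb_def k by (rule sum.cong) auto
  also have "\<dots> = (\<Sum>i<k. w i * w' i)" by (subst sum.lessThan_Suc_shift) simp
  finally show ?thesis unfolding inner_n_def k by simp
qed

lemma vsub_cong_inner:
  assumes "\<And>i. i < n \<Longrightarrow> x i = x' i" "\<And>i. i < n \<Longrightarrow> y i = y' i"
  shows "inner_n n (vsub x y) (vsub x y) = inner_n n (vsub x' y') (vsub x' y')"
  by (rule inner_cong) (use assms in \<open>auto simp: vsub_def\<close>)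

lemma construct:
  fixes n :: nat and \<sigma> P r1 r2 d t :: real
  assumes s: "\<sigma> > 0" and n: "n \<ge> 2" and r1: "r1 > 0" and r2: "r2 > 0" and dpos: "d > 0" and t: "t \<ge> 0"
    and d1: "2*d \<le> r1" and d2: "2*d \<le> r2"
    and dt: "2*\<sigma>*t \<le> d" and cross: "2*r2\<^sup>2 + 2*\<sigma>*t*r1 \<le> 3/4*d*r1" and pow: "r1\<^sup>2 + r2\<^sup>2 \<le> real n * P"
  shows "\<exists>N1 N2 (o1 :: nat \<Rightarrow> nat \<Rightarrow> real) (o2 :: nat \<Rightarrow> nat \<Rightarrow> nat \<Rightarrow> real).
     ((\<forall>s1<N1. o1 s1 \<in> Rn n \<and> norm_n n (o1 s1) = r1) \<and>
      angle_dense n (\<lambda>i. 0) o1 {..<N1} d \<and>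
      (\<forall>s1<N1. (\<forall>s2<N2. o2 s1 s2 \<in> Rn n \<and> norm_n n (vsub (o2 s1 s2) (o1 s1)) = r2 \<and>
               inner_n n (vsub (o2 s1 s2) (o1 s1)) (o1 s1) = 0) \<and>
           angle_dense n (o1 s1) (o2 s1) {..<N2} d) \<and>
      DI_code n \<sigma> P ({..<N1} \<times> {..<N2}) (2 * (2 * Phi (- t))) (2 * Phi (- t))
          (\<lambda>(s1, s2). o2 s1 s2)
          (\<lambda>(s1, s2). {y \<in> Rn n.
             \<bar>inner_n n (vsub y (o1 s1)) (o1 s1)\<bar> / r1 \<le> \<sigma> * t \<and>
             \<bar>inner_n n (vsub y (o2 s1 s2)) (vsub (o2 s1 s2) (o1 s1))\<bar> / r2 \<le> \<sigma> * t})) \<and>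
     (2*r1/sqrt(2*d*r1))^n \<le> real N1 * (2^(4*n) * 3^n) * (real n * (r1/sqrt(2*d*r1)+1)\<^sup>2) \<and>
     (2*r2/sqrt(2*d*r2))^(n-1) \<le> real N2 * (2^(4*(n-1)) * 3^(n-1)) * (real (n-1) * (r2/sqrt(2*d*r2)+1)\<^sup>2)"
proof -
  define \<delta>1 where "\<delta>1 = sqrt (2*d*r1)"
  define \<delta>2 where "\<delta>2 = sqrt (2*d*r2)"
  have \<delta>1: "0 < \<delta>1" "\<delta>1 \<le> r1" "\<delta>1\<^sup>2 = 2*d*r1"
  proof -
    show "0 < \<delta>1" unfolding \<delta>1_def using dpos r1 by simp
    show "\<delta>1\<^sup>2 = 2*d*r1" unfolding \<delta>1_def using dpos r1 by simp
    have "2*d*r1 \<le> r1 * r1" using d1 r1 by (intro mult_right_mono) auto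
    hence "sqrt (2*d*r1) \<le> sqrt (r1 * r1)" by (rule real_sqrt_le_mono)
    thus "\<delta>1 \<le> r1" unfolding \<delta>1_def using r1 by (simp add: real_sqrt_abs2)
  qed
  have \<delta>2: "0 < \<delta>2" "\<delta>2 \<le> r2" "\<delta>2\<^sup>2 = 2*d*r2"
  proof -
    show "0 < \<delta>2" unfolding \<delta>2_def using dpos r2 by simp
    show "\<delta>2\<^sup>2 = 2*d*r2" unfolding \<delta>2_def using dpos r2 by simp
    have "2*d*r2 \<le> r2 * r2" using d2 r2 by (intro mult_right_mono) auto
    hence "sqrt (2*d*r2) \<le> sqrt (r2 * r2)" by (rule real_sqrt_le_mono)
    thus "\<delta>2 \<le> r2" unfolding \<delta>2_def using r2 by (simp add: real_sqrt_abs2)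
  qed
  have n1: "n \<ge> 1" "n - 1 \<ge> 1" using n by auto
  obtain C1 where C1: "finite C1" "C1 \<subseteq> Rn n" "\<forall>x\<in>C1. inner_n n x x = r1\<^sup>2"
      "\<forall>x\<in>C1. \<forall>y\<in>C1. x \<noteq> y \<longrightarrow> \<delta>1\<^sup>2 \<le> inner_n n (vsub x y) (vsub x y)"
      "(2*r1/\<delta>1)^n \<le> real (card C1) * (2^(4*n) * 3^n) * (real n * (r1/\<delta>1+1)\<^sup>2)"
    using packing[OF n1(1) \<delta>1(1,2)] by blast
  obtain C2 where C2: "finite C2" "C2 \<subseteq> Rn (n-1)" "\<forall>x\<in>C2. inner_n (n-1) x x = r2\<^sup>2"
      "\<forall>x\<in>C2. \<forall>y\<in>C2. x \<noteq> y \<longrightarrow> \<delta>2\<^sup>2 \<le> inner_n (n-1) (vsub x y) (vsub x y)"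
      "(2*r2/\<delta>2)^(n-1) \<le> real (card C2) * (2^(4*(n-1)) * 3^(n-1)) * (real (n-1) * (r2/\<delta>2+1)\<^sup>2)"
    using packing[OF n1(2) \<delta>2(1,2)] by blast
  obtain h1 where h1: "bij_betw h1 {0..<card C1} C1" using ex_bij_betw_nat_finite[OF C1(1)] by blast
  obtain h2 where h2: "bij_betw h2 {0..<card C2} C2" using ex_bij_betw_nat_finite[OF C2(1)] by blast
  define N1 where "N1 = card C1"
  define N2 where "N2 = card C2"
  define o1 where "o1 = h1"
  define hvec where "hvec s1 s2 = hh n (o1 s1) r1 (emb n (h2 s2))" for s1 s2
  define o2 where "o2 s1 s2 = restrict (\<lambda>i. o1 s1 i + hvec s1 s2 i) {..<n}" for s1 s2
  have o1C: "o1 s1 \<in> C1" if "s1 < N1" for s1 using h1 that unfolding o1_def N1_def bij_betw_def by auto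
  have h2C: "h2 s2 \<in> C2" if "s2 < N2" for s2 using h2 that unfolding N2_def bij_betw_def by auto
  have o1inj: "o1 s1 \<noteq> o1 s1'" if "s1 < N1" "s1' < N1" "s1 \<noteq> s1'" for s1 s1'
    using h1 that unfolding o1_def N1_def bij_betw_def inj_on_def by auto
  have h2inj: "h2 s2 \<noteq> h2 s2'" if "s2 < N2" "s2' < N2" "s2 \<noteq> s2'" for s2 s2'
    using h2 that unfolding N2_def bij_betw_def inj_on_def by auto
  have o1R: "inner_n n (o1 s1) (o1 s1) = r1\<^sup>2" if "s1 < N1" for s1 using C1(3) o1C[OF that] by blast
  have vs: "vsub (o2 s1 s2) (o1 s1) i = hvec s1 s2 i" if "i < n" for s1 s2 i
    unfolding o2_def vsub_def using that by simp
  have hvec_inner: "inner_n n (hvec s1 s2) (hvec s1 s2') = inner_n (n-1) (h2 s2) (h2 s2')" for s1 s2 s2'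
    unfolding hvec_def hh_inner inner_emb[OF n1(1)] ..
  have hvR: "inner_n n (vsub (o2 s1 s2) (o1 s1)) (vsub (o2 s1 s2) (o1 s1)) = r2\<^sup>2" if "s2 < N2" for s1 s2
  proof -
    have "inner_n n (vsub (o2 s1 s2) (o1 s1)) (vsub (o2 s1 s2) (o1 s1)) = inner_n n (hvec s1 s2) (hvec s1 s2)"
      by (rule inner_cong) (simp_all add: vs)
    also have "\<dots> = r2\<^sup>2" unfolding hvec_inner using C2(3) h2C[OF that] by blast
    finally show ?thesis .
  qed
  have hvO: "inner_n n (vsub (o2 s1 s2) (o1 s1)) (o1 s1) = 0" if "s1 < N1" for s1 s2
  proof -
    have "inner_n n (vsub (o2 s1 s2) (o1 s1)) (o1 s1) = inner_n n (hvec s1 s2) (o1 s1)"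
      by (rule inner_cong) (simp_all add: vs)
    also have "\<dots> = r1 * emb n (h2 s2) 0" unfolding hvec_def by (rule hh_inner_o[OF n1(1) o1R[OF that]])
    finally show ?thesis using emb0[OF n1(1)] by simp
  qed
  have sep2: "2 * d * r2 \<le> inner_n n (vsub (vsub (o2 s1 s2) (o1 s1)) (vsub (o2 s1 s2') (o1 s1)))
                               (vsub (vsub (o2 s1 s2) (o1 s1)) (vsub (o2 s1 s2') (o1 s1)))"
    if "s2 < N2" "s2' < N2" "s2 \<noteq> s2'" for s1 s2 s2'
  proof -
    have "inner_n n (vsub (vsub (o2 s1 s2) (o1 s1)) (vsub (o2 s1 s2') (o1 s1)))
                               (vsub (vsub (o2 s1 s2) (o1 s1)) (vsub (o2 s1 s2') (o1 s1)))
        = inner_n n (vsub (hvec s1 s2) (hvec s1 s2')) (vsub (hvec s1 s2) (hvec s1 s2'))"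
      by (rule vsub_cong_inner) (simp_all add: vs)
    also have "\<dots> = inner_n (n-1) (vsub (h2 s2) (h2 s2')) (vsub (h2 s2) (h2 s2'))"
      unfolding inner_vsub_self hvec_inner by (simp add: inner_comm)
    finally show ?thesis using C2(4) h2C[OF that(1)] h2C[OF that(2)] h2inj[OF that] \<delta>2(3) by auto
  qed
  have sep1: "2 * d * r1 \<le> inner_n n (vsub (o1 s1) (o1 s1')) (vsub (o1 s1) (o1 s1'))"
    if "s1 < N1" "s1' < N1" "s1 \<noteq> s1'" for s1 s1'
    using C1(4) o1C[OF that(1)] o1C[OF that(2)] o1inj[OF that] \<delta>1(3) by auto
  have o2R: "o2 s1 s2 \<in> Rn n \<and> inner_n n (vsub (o2 s1 s2) (o1 s1)) (vsub (o2 s1 s2) (o1 s1)) = r2\<^sup>2 \<and>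
        inner_n n (vsub (o2 s1 s2) (o1 s1)) (o1 s1) = 0" if "s1 < N1" "s2 < N2" for s1 s2
    using hvR[OF that(2)] hvO[OF that(1)] unfolding o2_def by simp
  have DI: "DI_code n \<sigma> P ({..<N1} \<times> {..<N2}) (2 * (2 * Phi (- t))) (2 * Phi (- t))
          (\<lambda>(s1, s2). o2 s1 s2)
          (\<lambda>(s1, s2). {y \<in> Rn n.
             \<bar>inner_n n (vsub y (o1 s1)) (o1 s1)\<bar> / r1 \<le> \<sigma> * t \<and>
             \<bar>inner_n n (vsub y (o2 s1 s2)) (vsub (o2 s1 s2) (o1 s1))\<bar> / r2 \<le> \<sigma> * t})"
    by (rule DI_from_geom[OF s r1 r2 t o1R sep1 o2R sep2 dt cross pow])
  have ad1: "angle_dense n (\<lambda>i. 0) o1 {..<N1} d"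
  proof (rule angle_dense_from_sep[OF r1])
    fix j assume "j \<in> {..<N1}"
    thus "inner_n n (vsub (o1 j) (\<lambda>i. 0)) (vsub (o1 j) (\<lambda>i. 0)) = r1\<^sup>2"
      using o1R by (simp add: vsub_def)
  next
    fix j k assume "j \<in> {..<N1}" "k \<in> {..<N1}" "j \<noteq> k"
    thus "2 * d * r1 \<le> inner_n n (vsub (vsub (o1 j) (\<lambda>i. 0)) (vsub (o1 k) (\<lambda>i. 0))) (vsub (vsub (o1 j) (\<lambda>i. 0)) (vsub (o1 k) (\<lambda>i. 0)))"
      using sep1[of j k] by (simp add: vsub_def)
  qed
  have ad2: "angle_dense n (o1 s1) (o2 s1) {..<N2} d" for s1
  proof (rule angle_dense_from_sep[OF r2])
    fix j assume "j \<in> {..<N2}"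
    thus "inner_n n (vsub (o2 s1 j) (o1 s1)) (vsub (o2 s1 j) (o1 s1)) = r2\<^sup>2" using hvR by simp
  next
    fix j k assume "j \<in> {..<N2}" "k \<in> {..<N2}" "j \<noteq> k"
    thus "2 * d * r2 \<le> inner_n n (vsub (vsub (o2 s1 j) (o1 s1)) (vsub (o2 s1 k) (o1 s1))) (vsub (vsub (o2 s1 j) (o1 s1)) (vsub (o2 s1 k) (o1 s1)))"
      using sep2[of j k s1] by simp
  qed
  show ?thesis
  proof (intro exI conjI allI impI)
    show "angle_dense n (\<lambda>i. 0) o1 {..<N1} d" by (rule ad1)
    show "DI_code n \<sigma> P ({..<N1} \<times> {..<N2}) (2 * (2 * Phi (- t))) (2 * Phi (- t))
          (\<lambda>(s1, s2). o2 s1 s2)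
          (\<lambda>(s1, s2). {y \<in> Rn n.
             \<bar>inner_n n (vsub y (o1 s1)) (o1 s1)\<bar> / r1 \<le> \<sigma> * t \<and>
             \<bar>inner_n n (vsub y (o2 s1 s2)) (vsub (o2 s1 s2) (o1 s1))\<bar> / r2 \<le> \<sigma> * t})" by (rule DI)
    show "(2*r1/sqrt(2*d*r1))^n \<le> real N1 * (2^(4*n) * 3^n) * (real n * (r1/sqrt(2*d*r1)+1)\<^sup>2)"
      using C1(5) unfolding N1_def \<delta>1_def .
    show "(2*r2/sqrt(2*d*r2))^(n-1) \<le> real N2 * (2^(4*(n-1)) * 3^(n-1)) * (real (n-1) * (r2/sqrt(2*d*r2)+1)\<^sup>2)"
      using C2(5) unfolding N2_def \<delta>2_def .
    fix s1 assume s1: "s1 < N1"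
    show "o1 s1 \<in> Rn n" using C1(2) o1C[OF s1] by blast
    show "norm_n n (o1 s1) = r1" using o1R[OF s1] r1 by (intro norm_of_inner) auto
    show "angle_dense n (o1 s1) (o2 s1) {..<N2} d" by (rule ad2)
    fix s2 assume s2: "s2 < N2"
    show "o2 s1 s2 \<in> Rn n" using o2R[OF s1 s2] by simp
    show "norm_n n (vsub (o2 s1 s2) (o1 s1)) = r2" using o2R[OF s1 s2] r2 by (intro norm_of_inner) auto
    show "inner_n n (vsub (o2 s1 s2) (o1 s1)) (o1 s1) = 0" using o2R[OF s1 s2] by simp
  qed
qed

lemma rate_aux:
  assumes rho: "\<rho> \<ge> 1" and m: "m \<ge> 1"
    and b: "(2*\<rho>)^m \<le> real N * (2^(4*m) * 3^m) * (real m * (\<rho>+1)\<^sup>2)"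
  shows "N > 0 \<and> (real m - 2) * log 2 \<rho> - 5 * real m - 2 - log 2 (real m) \<le> log 2 (real N)"
proof -
  have r0: "\<rho> > 0" using rho by simp
  have "(\<rho>+1)\<^sup>2 \<le> (2*\<rho>)\<^sup>2" using rho by (intro power_mono) auto
  hence "real N * (2^(4*m) * 3^m) * (real m * (\<rho>+1)\<^sup>2) \<le> real N * (2^(4*m) * 3^m) * (real m * (2*\<rho>)\<^sup>2)"
    by (intro mult_left_mono) auto
  with b have b1: "(2*\<rho>)^m \<le> real N * (2^(4*m) * 3^m) * (real m * (2*\<rho>)\<^sup>2)" by linarith
  have e48: "(2::real)^(4*m) * 3^m = 48^m"
  proof -
    have "(2::real)^(4*m) = 16^m" by (simp add: power_mult)
    thus ?thesis by (simp add: power_mult_distrib[symmetric])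
  qed
  have b2: "(2*\<rho>)^m \<le> real N * 48^m * real m * (4 * \<rho>\<^sup>2)"
    using b1 unfolding e48 by (simp add: power_mult_distrib mult_ac)
  have A: "(2*\<rho>)^m > 0" using r0 by simp
  have Npos: "N > 0"
  proof (rule ccontr)
    assume "\<not> N > 0" hence "N = 0" by simp
    thus False using b2 A by simp
  qed
  have mpos: "real m > 0" using m by simp
  have "log 2 ((2*\<rho>)^m) \<le> log 2 (real N * 48^m * real m * (4 * \<rho>\<^sup>2))"
    by (rule log_mono) (use b2 A in auto)
  also have "log 2 (real N * 48^m * real m * (4 * \<rho>\<^sup>2)) = log 2 (real N) + real m * log 2 48 + log 2 (real m) + 2 + 2 * log 2 \<rho>"
  proof -
    have "log 2 (real N * 48^m * real m * (4 * \<rho>\<^sup>2)) = log 2 (real N) + log 2 (48^m) + log 2 (real m) + log 2 4 + log 2 (\<rho>\<^sup>2)"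
      using Npos mpos r0 by (simp add: log_mult)
    also have "log 2 (48^m) = real m * log 2 48" by (simp add: log_nat_power)
    also have "log 2 (\<rho>\<^sup>2) = 2 * log 2 \<rho>" using r0 by (simp add: log_nat_power)
    also have "log 2 (4::real) = 2"
    proof -
      have "log 2 (4::real) = log 2 (2^2)" by simp
      also have "\<dots> = 2" by (subst log_nat_power) auto
      finally show ?thesis .
    qed
    finally show ?thesis by simp
  qed
  also have "log 2 ((2*\<rho>)^m) = real m * (1 + log 2 \<rho>)"
    using r0 by (simp add: log_nat_power log_mult algebra_simps)
  finally have L: "real m * (1 + log 2 \<rho>) \<le> log 2 (real N) + real m * log 2 48 + log 2 (real m) + 2 + 2 * log 2 \<rho>"
    by simp
  have l48: "log 2 (48::real) \<le> 6"
  proof -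
    have "log 2 (48::real) \<le> log 2 (2^6)" by (subst log_le_cancel_iff) auto
    also have "\<dots> = 6" by (subst log_nat_power) auto
    finally show ?thesis .
  qed
  have "real m * log 2 48 \<le> real m * 6" using l48 by (intro mult_left_mono) auto
  thus ?thesis using L Npos by (simp add: algebra_simps)
qed

lemma DI_code_reindex:
  assumes "DI_code n \<sigma> P I l1 l2 u D" "inj_on g J" "g ` J \<subseteq> I" "finite J"
  shows "DI_code n \<sigma> P J l1 l2 (u \<circ> g) (D \<circ> g)"
proof -
  have ne: "g i \<noteq> g j" if "i \<in> J" "j \<in> J" "i \<noteq> j" for i j
    using assms(2) that unfolding inj_on_def by blast
  show ?thesis using assms(1,3,4) ne unfolding DI_code_def by (force simp: image_subset_iff)
qed

lemma root4_sq: "x \<ge> 0 \<Longrightarrow> (root 4 x)\<^sup>2 = sqrt x"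
proof -
  assume x: "x \<ge> 0"
  have "root 4 x = root 2 (root 2 x)" using real_root_mult_exp[of 2 2 x] by simp
  hence "(root 4 x)\<^sup>2 = root 2 x" using x by simp
  thus ?thesis by (simp add: sqrt_def)
qed

lemma Phi_lim: "(\<lambda>n::nat. Phi (- log 2 (real n))) \<longlonglongrightarrow> 0"
proof -
  let ?M = "density lborel std_normal_density"
  interpret real_distribution ?M by (rule real_dist_normal_dist)
  have Pc: "Phi = cdf ?M" unfolding Phi_def cdf_def by (rule ext) simp
  have f: "filterlim (\<lambda>n::nat. - log 2 (real n)) at_bot sequentially" by real_asymp
  show ?thesis unfolding Pc using filterlim_compose[OF cdf_lim_at_bot f] by (simp add: o_def)
qed


definition good :: "real \<Rightarrow> real \<Rightarrow> real \<Rightarrow> nat \<Rightarrow> nat \<Rightarrow> nat \<Rightarrow> (nat \<Rightarrow> nat \<Rightarrow> real) \<Rightarrow> (nat \<Rightarrow> nat \<Rightarrow> nat \<Rightarrow> real) \<Rightarrow> bool" where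
  "good \<sigma> P c n N1 N2 o1 o2 \<longleftrightarrow>
        (let lam = 2 * Phi (- log 2 (real n)); d = 3 * \<sigma> * log 2 (real n);
            r1 = sqrt (c * real n); r2 = root 4 (c * real n) in
        (\<forall>s1<N1. o1 s1 \<in> Rn n \<and> norm_n n (o1 s1) = r1) \<and>
        angle_dense n (\<lambda>i. 0) o1 {..<N1} d \<and>
        (\<forall>s1<N1.
           (\<forall>s2<N2. o2 s1 s2 \<in> Rn n \<and>
               norm_n n (vsub (o2 s1 s2) (o1 s1)) = r2 \<and>
               inner_n n (vsub (o2 s1 s2) (o1 s1)) (o1 s1) = 0) \<and>
           angle_dense n (o1 s1) (o2 s1) {..<N2} d) \<and>
        DI_code n \<sigma> P ({..<N1} \<times> {..<N2}) (2 * lam) lam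
          (\<lambda>(s1, s2). o2 s1 s2)
          (\<lambda>(s1, s2). {y \<in> Rn n.
             \<bar>inner_n n (vsub y (o1 s1)) (o1 s1)\<bar> / r1 \<le> \<sigma> * log 2 (real n) \<and>
             \<bar>inner_n n (vsub y (o2 s1 s2)) (vsub (o2 s1 s2) (o1 s1))\<bar> / r2
                \<le> \<sigma> * log 2 (real n)}))"

definition rho1 :: "real \<Rightarrow> real \<Rightarrow> nat \<Rightarrow> real" where
  "rho1 \<sigma> c n = sqrt (c * real n) / sqrt (2 * (3 * \<sigma> * log 2 (real n)) * sqrt (c * real n))"
definition rho2 :: "real \<Rightarrow> real \<Rightarrow> nat \<Rightarrow> real" where
  "rho2 \<sigma> c n = root 4 (c * real n) / sqrt (2 * (3 * \<sigma> * log 2 (real n)) * root 4 (c * real n))"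

lemma construct':
  fixes \<sigma> P c :: real and n :: nat
  assumes s: "\<sigma> > 0" and c: "c > 0" and n: "n \<ge> 2"
    and e2: "2 * (3*\<sigma>*log 2 (real n)) \<le> root 4 (c * real n)"
    and e3: "2 * (3*\<sigma>*log 2 (real n)) \<le> sqrt (c * real n)"
    and e4: "8 \<le> \<sigma> * log 2 (real n)"
    and e5: "sqrt (c * real n) \<le> (P - c) * real n"
  shows "\<exists>N1 N2 o1 o2. good \<sigma> P c n N1 N2 o1 o2 \<and>
     (2*rho1 \<sigma> c n)^n \<le> real N1 * (2^(4*n) * 3^n) * (real n * (rho1 \<sigma> c n+1)\<^sup>2) \<and>
     (2*rho2 \<sigma> c n)^(n-1) \<le> real N2 * (2^(4*(n-1)) * 3^(n-1)) * (real (n-1) * (rho2 \<sigma> c n+1)\<^sup>2)"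
proof -
  define t where "t = log 2 (real n)"
  define r1 where "r1 = sqrt (c * real n)"
  define r2 where "r2 = root 4 (c * real n)"
  define d where "d = 3 * \<sigma> * t"
  have cn: "c * real n > 0" using c n by simp
  have t1: "t \<ge> 1" unfolding t_def using n by simp
  have r1p: "r1 > 0" unfolding r1_def using cn by simp
  have r2p: "r2 > 0" unfolding r2_def using cn by simp
  have dp: "d > 0" unfolding d_def using s t1 by simp
  have r21: "r2\<^sup>2 = r1" unfolding r1_def r2_def using root4_sq cn by simp
  have cross: "2*r2\<^sup>2 + 2*\<sigma>*t*r1 \<le> 3/4*d*r1"
  proof -
    have "2 + 2*\<sigma>*t \<le> 3/4*d" using e4 unfolding d_def t_def by simp
    hence "(2 + 2*\<sigma>*t) * r1 \<le> 3/4*d * r1" using r1p by (intro mult_right_mono) auto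
    thus ?thesis unfolding r21 by (simp add: algebra_simps)
  qed
  have pow: "r1\<^sup>2 + r2\<^sup>2 \<le> real n * P"
  proof -
    have "r1\<^sup>2 = c * real n" unfolding r1_def using cn by simp
    thus ?thesis unfolding r21 using e5 unfolding r1_def by (simp add: algebra_simps)
  qed
  have dt: "2*\<sigma>*t \<le> d" unfolding d_def using s t1 by simp
  have d1: "2*d \<le> r1" using e3 unfolding d_def r1_def t_def by simp
  have d2: "2*d \<le> r2" using e2 unfolding d_def r2_def t_def by simp
  obtain N1 N2 o1 o2 where H: "((\<forall>s1<N1. o1 s1 \<in> Rn n \<and> norm_n n (o1 s1) = r1) \<and>
      angle_dense n (\<lambda>i. 0) o1 {..<N1} d \<and>
      (\<forall>s1<N1. (\<forall>s2<N2. o2 s1 s2 \<in> Rn n \<and> norm_n n (vsub (o2 s1 s2) (o1 s1)) = r2 \<and>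
               inner_n n (vsub (o2 s1 s2) (o1 s1)) (o1 s1) = 0) \<and>
           angle_dense n (o1 s1) (o2 s1) {..<N2} d) \<and>
      DI_code n \<sigma> P ({..<N1} \<times> {..<N2}) (2 * (2 * Phi (- t))) (2 * Phi (- t))
          (\<lambda>(s1, s2). o2 s1 s2)
          (\<lambda>(s1, s2). {y \<in> Rn n.
             \<bar>inner_n n (vsub y (o1 s1)) (o1 s1)\<bar> / r1 \<le> \<sigma> * t \<and>
             \<bar>inner_n n (vsub y (o2 s1 s2)) (vsub (o2 s1 s2) (o1 s1))\<bar> / r2 \<le> \<sigma> * t})) \<and>
     (2*r1/sqrt(2*d*r1))^n \<le> real N1 * (2^(4*n) * 3^n) * (real n * (r1/sqrt(2*d*r1)+1)\<^sup>2) \<and>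
     (2*r2/sqrt(2*d*r2))^(n-1) \<le> real N2 * (2^(4*(n-1)) * 3^(n-1)) * (real (n-1) * (r2/sqrt(2*d*r2)+1)\<^sup>2)"
    using construct[OF s n r1p r2p dp _ d1 d2 dt cross pow] t1 by auto
  have g: "good \<sigma> P c n N1 N2 o1 o2"
    using H unfolding good_def Let_def t_def[symmetric] r1_def[symmetric] r2_def[symmetric] d_def[symmetric]
    by blast
  have rr1: "rho1 \<sigma> c n = r1/sqrt(2*d*r1)" unfolding rho1_def r1_def d_def t_def by simp
  have rr2: "rho2 \<sigma> c n = r2/sqrt(2*d*r2)" unfolding rho2_def r2_def d_def t_def by simp
  show ?thesis
    by (rule exI[of _ N1], rule exI[of _ N2], rule exI[of _ o1], rule exI[of _ o2])
       (use g H in \<open>simp only: rr1 rr2 mult.assoc times_divide_eq_right\<close>)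
qed


lemma rate_lim:
  fixes c \<sigma> :: real assumes c: "c > 0" and s: "\<sigma> > 0"
  shows "(\<lambda>n::nat. (((real n - 2) * log 2 (sqrt (c * real n) / sqrt (2 * (3 * \<sigma> * log 2 (real n)) * sqrt (c * real n)))
       - 5 * real n - 2 - log 2 (real n))
     + ((real n - 1 - 2) * log 2 (root 4 (c * real n) / sqrt (2 * (3 * \<sigma> * log 2 (real n)) * root 4 (c * real n)))
       - 5 * (real n - 1) - 2 - log 2 (real n - 1))) / (real n * log 2 (real n))) \<longlonglongrightarrow> 3/8"
  using c s by real_asymp



theorem theorem3:
  fixes P \<sigma> c :: real
  assumes "P > 0" and "\<sigma> > 0" and "0 < c" and "c < P"
  shows "(\<exists>n0 (N1 :: nat \<Rightarrow> nat) (N2 :: nat \<Rightarrow> nat)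
            (o1 :: nat \<Rightarrow> nat \<Rightarrow> (nat \<Rightarrow> real)) (o2 :: nat \<Rightarrow> nat \<Rightarrow> nat \<Rightarrow> (nat \<Rightarrow> real)).
     (\<forall>n\<ge>n0.
        let lam = 2 * Phi (- log 2 (real n)); d = 3 * \<sigma> * log 2 (real n);
            r1 = sqrt (c * real n); r2 = root 4 (c * real n) in
        (\<forall>s1<N1 n. o1 n s1 \<in> Rn n \<and> norm_n n (o1 n s1) = r1) \<and>
        angle_dense n (\<lambda>i. 0) (o1 n) {..<N1 n} d \<and>
        (\<forall>s1<N1 n.
           (\<forall>s2<N2 n. o2 n s1 s2 \<in> Rn n \<and>
               norm_n n (vsub (o2 n s1 s2) (o1 n s1)) = r2 \<and>
               inner_n n (vsub (o2 n s1 s2) (o1 n s1)) (o1 n s1) = 0) \<and>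
           angle_dense n (o1 n s1) (o2 n s1) {..<N2 n} d) \<and>
        DI_code n \<sigma> P ({..<N1 n} \<times> {..<N2 n}) (2 * lam) lam
          (\<lambda>(s1, s2). o2 n s1 s2)
          (\<lambda>(s1, s2). {y \<in> Rn n.
             \<bar>inner_n n (vsub y (o1 n s1)) (o1 n s1)\<bar> / r1 \<le> \<sigma> * log 2 (real n) \<and>
             \<bar>inner_n n (vsub y (o2 n s1 s2)) (vsub (o2 n s1 s2) (o1 n s1))\<bar> / r2
                \<le> \<sigma> * log 2 (real n)})) \<and>
     (\<forall>\<epsilon>>0. \<forall>\<^sub>F n in sequentially.
        log 2 (real (N1 n * N2 n)) / (real n * log 2 (real n)) \<ge> 3/8 - \<epsilon>))
   \<and> achievable_lin_rate \<sigma> P (3/8)"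
proof -
  have s: "\<sigma> > 0" and c: "c > 0" and cP: "P - c > 0" using assms by auto
  have ev: "eventually (\<lambda>n::nat. 2 \<le> n \<and> 2 * (3*\<sigma>*log 2 (real n)) \<le> root 4 (c * real n) \<and>
       2 * (3*\<sigma>*log 2 (real n)) \<le> sqrt (c * real n) \<and> 8 \<le> \<sigma> * log 2 (real n) \<and>
       sqrt (c * real n) \<le> (P - c) * real n \<and> 1 \<le> rho1 \<sigma> c n \<and> 1 \<le> rho2 \<sigma> c n) sequentially"
  proof (intro eventually_conj)
    show "eventually (\<lambda>n::nat. 2 \<le> n) sequentially" by (rule eventually_ge_at_top)
    show "eventually (\<lambda>n::nat. 2 * (3*\<sigma>*log 2 (real n)) \<le> root 4 (c * real n)) sequentially"
      using s c by real_asymp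
    show "eventually (\<lambda>n::nat. 2 * (3*\<sigma>*log 2 (real n)) \<le> sqrt (c * real n)) sequentially"
      using s c by real_asymp
    show "eventually (\<lambda>n::nat. 8 \<le> \<sigma> * log 2 (real n)) sequentially"
      using s c by real_asymp
    show "eventually (\<lambda>n::nat. sqrt (c * real n) \<le> (P - c) * real n) sequentially"
      using cP c by real_asymp
    show "eventually (\<lambda>n::nat. 1 \<le> rho1 \<sigma> c n) sequentially"
      unfolding rho1_def using s c by real_asymp
    show "eventually (\<lambda>n::nat. 1 \<le> rho2 \<sigma> c n) sequentially"
      unfolding rho2_def using s c by real_asymp
  qed
  then obtain n0 where n0: "\<And>n. n \<ge> n0 \<Longrightarrow> 2 \<le> n \<and> 2 * (3*\<sigma>*log 2 (real n)) \<le> root 4 (c * real n) \<and>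
       2 * (3*\<sigma>*log 2 (real n)) \<le> sqrt (c * real n) \<and> 8 \<le> \<sigma> * log 2 (real n) \<and>
       sqrt (c * real n) \<le> (P - c) * real n \<and> 1 \<le> rho1 \<sigma> c n \<and> 1 \<le> rho2 \<sigma> c n"
    unfolding eventually_sequentially by blast
  define Q where "Q n X \<longleftrightarrow> (case X of (N1, N2, o1, o2) \<Rightarrow> good \<sigma> P c n N1 N2 o1 o2 \<and>
     (2*rho1 \<sigma> c n)^n \<le> real N1 * (2^(4*n) * 3^n) * (real n * (rho1 \<sigma> c n+1)\<^sup>2) \<and>
     (2*rho2 \<sigma> c n)^(n-1) \<le> real N2 * (2^(4*(n-1)) * 3^(n-1)) * (real (n-1) * (rho2 \<sigma> c n+1)\<^sup>2))"
    for n :: nat and X :: "nat \<times> nat \<times> (nat \<Rightarrow> nat \<Rightarrow> real) \<times> (nat \<Rightarrow> nat \<Rightarrow> nat \<Rightarrow> real)"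
  have "\<forall>n. \<exists>X. n \<ge> n0 \<longrightarrow> Q n X"
  proof
    fix n
    show "\<exists>X. n \<ge> n0 \<longrightarrow> Q n X"
    proof (cases "n \<ge> n0")
      case True
      from n0[OF True] obtain N1 N2 o1 o2 where "good \<sigma> P c n N1 N2 o1 o2 \<and>
         (2*rho1 \<sigma> c n)^n \<le> real N1 * (2^(4*n) * 3^n) * (real n * (rho1 \<sigma> c n+1)\<^sup>2) \<and>
         (2*rho2 \<sigma> c n)^(n-1) \<le> real N2 * (2^(4*(n-1)) * 3^(n-1)) * (real (n-1) * (rho2 \<sigma> c n+1)\<^sup>2)"
        using construct'[OF s c] by blast
      thus ?thesis unfolding Q_def by (intro exI[of _ "(N1, N2, o1, o2)"]) simp
    qed simp
  qed
  then obtain F where F: "\<And>n. n \<ge> n0 \<Longrightarrow> Q n (F n)" by metis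
  define N1 where "N1 n = fst (F n)" for n
  define N2 where "N2 n = fst (snd (F n))" for n
  define O1 where "O1 n = fst (snd (snd (F n)))" for n
  define O2 where "O2 n = snd (snd (snd (F n)))" for n
  have FQ: "good \<sigma> P c n (N1 n) (N2 n) (O1 n) (O2 n) \<and>
     (2*rho1 \<sigma> c n)^n \<le> real (N1 n) * (2^(4*n) * 3^n) * (real n * (rho1 \<sigma> c n+1)\<^sup>2) \<and>
     (2*rho2 \<sigma> c n)^(n-1) \<le> real (N2 n) * (2^(4*(n-1)) * 3^(n-1)) * (real (n-1) * (rho2 \<sigma> c n+1)\<^sup>2)"
    if "n \<ge> n0" for n
    using F[OF that] unfolding Q_def N1_def N2_def O1_def O2_def by (simp split: prod.splits)
  define g where "g n = (((real n - 2) * log 2 (sqrt (c * real n) / sqrt (2 * (3 * \<sigma> * log 2 (real n)) * sqrt (c * real n)))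
       - 5 * real n - 2 - log 2 (real n))
     + ((real n - 1 - 2) * log 2 (root 4 (c * real n) / sqrt (2 * (3 * \<sigma> * log 2 (real n)) * root 4 (c * real n)))
       - 5 * (real n - 1) - 2 - log 2 (real n - 1))) / (real n * log 2 (real n))" for n :: nat
  have glim: "g \<longlonglongrightarrow> 3/8" unfolding g_def by (rule rate_lim[OF c s])
  have Npos: "N1 n > 0 \<and> N2 n > 0 \<and> g n \<le> log 2 (real (N1 n * N2 n)) / (real n * log 2 (real n))"
    if n: "n \<ge> n0" for n
  proof -
    have nn: "2 \<le> n" "1 \<le> rho1 \<sigma> c n" "1 \<le> rho2 \<sigma> c n" using n0[OF n] by auto
    have R1: "N1 n > 0 \<and> (real n - 2) * log 2 (rho1 \<sigma> c n) - 5 * real n - 2 - log 2 (real n) \<le> log 2 (real (N1 n))"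
      by (rule rate_aux[OF nn(2)]) (use nn FQ[OF n] in auto)
    have R2: "N2 n > 0 \<and> (real (n-1) - 2) * log 2 (rho2 \<sigma> c n) - 5 * real (n-1) - 2 - log 2 (real (n-1)) \<le> log 2 (real (N2 n))"
      by (rule rate_aux[OF nn(3)]) (use nn FQ[OF n] in auto)
    have rn1: "real (n - 1) = real n - 1" using nn by simp
    have "log 2 (real (N1 n * N2 n)) = log 2 (real (N1 n)) + log 2 (real (N2 n))"
      using R1 R2 by (simp add: log_mult)
    moreover have den: "real n * log 2 (real n) > 0" using nn by simp
    ultimately show ?thesis using R1 R2 unfolding g_def rn1 rho1_def rho2_def
      by (auto intro!: divide_right_mono simp: algebra_simps)
  qed
  have rate: "\<forall>\<epsilon>>0. \<forall>\<^sub>F n in sequentially. log 2 (real (N1 n * N2 n)) / (real n * log 2 (real n)) \<ge> 3/8 - \<epsilon>"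
  proof (intro allI impI)
    fix \<epsilon> :: real assume e: "\<epsilon> > 0"
    have "eventually (\<lambda>n. 3/8 - \<epsilon> < g n) sequentially" by (rule order_tendstoD(1)[OF glim]) (use e in simp)
    moreover have "eventually (\<lambda>n. n \<ge> n0) sequentially" by (rule eventually_ge_at_top)
    ultimately show "\<forall>\<^sub>F n in sequentially. log 2 (real (N1 n * N2 n)) / (real n * log 2 (real n)) \<ge> 3/8 - \<epsilon>"
      by eventually_elim (use Npos in force)
  qed
  have main: "\<forall>n\<ge>n0. good \<sigma> P c n (N1 n) (N2 n) (O1 n) (O2 n)" using FQ by blast
  have ach: "achievable_lin_rate \<sigma> P (3/8)"
    unfolding achievable_lin_rate_def
  proof (intro conjI allI impI)
    fix \<epsilon> :: real assume e: "\<epsilon> > 0"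
    obtain n1 where n1: "\<And>n. n \<ge> n1 \<Longrightarrow> log 2 (real (N1 n * N2 n)) / (real n * log 2 (real n)) \<ge> 3/8 - \<epsilon>"
      using rate e unfolding eventually_sequentially by blast
    define gg where "gg n k = (k div N2 n, k mod N2 n)" for n k :: nat
    define U where "U n = (\<lambda>(s1, s2). O2 n s1 s2) \<circ> gg n" for n
    define DD where "DD n = (\<lambda>(s1, s2). {y \<in> Rn n.
             \<bar>inner_n n (vsub y (O1 n s1)) (O1 n s1)\<bar> / sqrt (c * real n) \<le> \<sigma> * log 2 (real n) \<and>
             \<bar>inner_n n (vsub y (O2 n s1 s2)) (vsub (O2 n s1 s2) (O1 n s1))\<bar> / root 4 (c * real n)
                \<le> \<sigma> * log 2 (real n)}) \<circ> gg n" for n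
    show "\<exists>n0 N l1 l2 (u :: nat \<Rightarrow> nat \<Rightarrow> (nat \<Rightarrow> real)) D.
       (\<forall>n\<ge>n0. DI_code n \<sigma> P {..<N n} (l1 n) (l2 n) (u n) (D n) \<and>
                log 2 (real (N n)) / (real n * log 2 (real n)) \<ge> 3/8 - \<epsilon>) \<and>
       l1 \<longlonglongrightarrow> 0 \<and> l2 \<longlonglongrightarrow> 0"
    proof (intro exI conjI allI impI)
      fix n assume n: "max n0 n1 \<le> n"
      hence nn0: "n \<ge> n0" and nn1: "n \<ge> n1" by auto
      have N2p: "N2 n > 0" using Npos[OF nn0] by simp
      have DI: "DI_code n \<sigma> P ({..<N1 n} \<times> {..<N2 n}) (2 * (2 * Phi (- log 2 (real n)))) (2 * Phi (- log 2 (real n)))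
          (\<lambda>(s1, s2). O2 n s1 s2)
          (\<lambda>(s1, s2). {y \<in> Rn n.
             \<bar>inner_n n (vsub y (O1 n s1)) (O1 n s1)\<bar> / sqrt (c * real n) \<le> \<sigma> * log 2 (real n) \<and>
             \<bar>inner_n n (vsub y (O2 n s1 s2)) (vsub (O2 n s1 s2) (O1 n s1))\<bar> / root 4 (c * real n)
                \<le> \<sigma> * log 2 (real n)})"
        using main nn0 unfolding good_def Let_def by blast
      have inj: "inj_on (gg n) {..<N1 n * N2 n}"
      proof (rule inj_onI)
        fix a b assume "gg n a = gg n b"
        hence "a div N2 n = b div N2 n" "a mod N2 n = b mod N2 n" unfolding gg_def by auto
        thus "a = b" by (metis div_mult_mod_eq)
      qed
      have img: "gg n ` {..<N1 n * N2 n} \<subseteq> {..<N1 n} \<times> {..<N2 n}"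
      proof
        fix x assume "x \<in> gg n ` {..<N1 n * N2 n}"
        then obtain k where k: "k < N1 n * N2 n" "x = gg n k" by auto
        have "k div N2 n < N1 n" using k(1) N2p by (simp add: less_mult_imp_div_less)
        moreover have "k mod N2 n < N2 n" using N2p by simp
        ultimately show "x \<in> {..<N1 n} \<times> {..<N2 n}" unfolding k(2) gg_def by simp
      qed
      show "DI_code n \<sigma> P {..<N1 n * N2 n} ((\<lambda>n. 2 * (2 * Phi (- log 2 (real n)))) n)
          ((\<lambda>n. 2 * Phi (- log 2 (real n))) n) (U n) (DD n)"
        unfolding U_def DD_def by (rule DI_code_reindex[OF DI inj img]) simp
      show "3/8 - \<epsilon> \<le> log 2 (real (N1 n * N2 n)) / (real n * log 2 (real n))" by (rule n1[OF nn1])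
    next
      show "(\<lambda>n. 2 * (2 * Phi (- log 2 (real n)))) \<longlonglongrightarrow> 0"
        using tendsto_mult_right_zero[OF tendsto_mult_right_zero[OF Phi_lim, of 2], of 2] by simp
      show "(\<lambda>n. 2 * Phi (- log 2 (real n))) \<longlonglongrightarrow> 0"
        using tendsto_mult_right_zero[OF Phi_lim, of 2] by simp
    qed
  qed simp
  show ?thesis
    apply (rule conjI[OF _ ach])
    apply (rule exI[of _ n0], rule exI[of _ N1], rule exI[of _ N2], rule exI[of _ O1], rule exI[of _ O2])
    using main rate unfolding good_def by blast
qed


end
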